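(* In the outer-domain setup, let $T>0$, $f_0\in C(\overline{U_T})$, $w_0\in C(\overline U)$, $G\in C(\Gamma\times[0,T])$, and let $w\in C^{2,1}_{x,t}(U_T)\cap C(\overline{U_T})$ be a bounded solution of $\mathcal Lw=f_0$ in $U_T$, $w(x,0)=w_0(x)$ in $U$, $w=G$ on $\Gamma\times(0,T]$. If $\lim_{|x|\to\infty}w_0(x)=0$ and $\lim_{|x|\to\infty}\sup_{0\le t\le T}|f_0(x,t)|=0$, then $\lim_{r\to\infty}\sup_{\mathcal S_r\times[0,T]}|w|=0$.
   Context: Setup. Fix $n\ge2$. For $i=1,2$: $g_i(s)=a^{(i)}_0+\sum_{j=1}^{N_i}a^{(i)}_js^{\alpha^{(i)}_j}$ ($s\ge0$), $a^{(i)}_0>0$, $a^{(i)}_j\ge0$, real $0<\alpha^{(i)}_1<\dots$; $G_i(u)=g_i(|u|)u$ ($u\in\mathbb R$). $f_1,f_2\in C([0,1])\cap C^1((0,1))$, $f_1(0)=0=f_2(1)$, $f_1'>0>f_2'$ on $(0,1)$; $p_c'\in C^1((0,1))$, $p_c'>0$; $F_i=1/(p_c'f_i)$. Fix $r_0>0$, $c_1,c_2$ with $c_1^2+c_2^2>0$, $s_0\in(0,1)$, and let $\hat S$ be a $C^1$ solution on $[r_0,\infty)$ of $\hat S'=G_2(c_2r^{1-n})F_2(\hat S)-G_1(c_1r^{1-n})F_1(\hat S)$, $\hat S(r_0)=s_0$, with $0<\underline s\le\hat S(r)\le\bar s<1$ for all $r\ge r_0$. For $|x|\ge r_0$: $S_*(x)=\hat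 S(|x|)$, $u_i^*(x)=c_i|x|^{-n}x$. For $u\in\mathbb R^n$: $\mathbf G_i(u)=g_i(|u|)u$, Jacobian $\mathbf G_i'(u)=g_i(|u|)I_n+g_i'(|u|)uu^T/|u|$ ($=g_i(0)I_n$ at $u=0$). $B=F_1(S_* )\mathbf G_1'(u_1^* )+F_2(S_* )\mathbf G_2'(u_2^* )$, $A=B^{-1}$, $b=F_2'(S_* )\mathbf G_2(u_2^* )-F_1'(S_* )\mathbf G_1(u_1^* )$. $\mathcal Lw=\partial_tw-\nabla\cdot(A\nabla w)-b\cdot(A\nabla w)$. Outer domain: $U=\mathbb R^n\setminus\overline{B_{r_0}}$, $\Gamma=\{|x|=r_0\}$, $U_T=U\times(0,T]$, $\overline{U_T}=\overline U\times[0,T]$, $\mathcal S_r=\{|x|=r\}$. $C^{2,1}_{x,t}$ as usual. *)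

theory Defs
  imports "HOL-Analysis.Analysis"
begin

definition gfun :: "real \<Rightarrow> (nat \<Rightarrow> real) \<Rightarrow> (nat \<Rightarrow> real) \<Rightarrow> nat \<Rightarrow> real \<Rightarrow> real" where
  "gfun a0 a al N s = a0 + (\<Sum>j=1..N. a j * s powr al j)"

definition g_admissible :: "real \<Rightarrow> (nat \<Rightarrow> real) \<Rightarrow> (nat \<Rightarrow> real) \<Rightarrow> nat \<Rightarrow> bool" where
  "g_admissible a0 a al N \<longleftrightarrow> a0 > 0 \<and> (\<forall>j\<in>{1..N}. a j \<ge> 0) \<and> (\<forall>j\<in>{1..N}. 0 < al j)
     \<and> (\<forall>j\<in>{1..N}. \<forall>k\<in>{1..N}. j < k \<longrightarrow> al j < al k)"

definition outer :: "real^'n \<Rightarrow> real^'n \<Rightarrow> real^'n^'n" where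
  "outer u v = (\<chi> i j. u $ i * v $ j)"

text \<open>Jacobian of the vector map u |-> g(|u|) u.\<close>
definition Gjac :: "(real \<Rightarrow> real) \<Rightarrow> real^'n \<Rightarrow> real^'n^'n" where
  "Gjac g u = (if u = 0 then g 0 *\<^sub>R mat 1
      else g (norm u) *\<^sub>R mat 1 + (deriv g (norm u) / norm u) *\<^sub>R outer u u)"

definition partial :: "'n::finite \<Rightarrow> (real^'n \<Rightarrow> real) \<Rightarrow> real^'n \<Rightarrow> real" where
  "partial i h x = deriv (\<lambda>s. h (x + s *\<^sub>R axis i 1)) 0"

definition grad :: "(real^'n::finite \<Rightarrow> real) \<Rightarrow> real^'n \<Rightarrow> real^'n" where
  "grad h x = (\<chi> i. partial i h x)"

definition C21 :: "(real^'n::finite) set \<Rightarrow> real \<Rightarrow> (real^'n \<Rightarrow> real \<Rightarrow> real) \<Rightarrow> bool" where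
  "C21 W T w \<longleftrightarrow>
     (\<forall>t\<in>{0<..T}. \<forall>x\<in>W. (\<lambda>y. w y t) differentiable (at x)
        \<and> (\<forall>i. (\<lambda>y. partial i (\<lambda>z. w z t) y) differentiable (at x))
        \<and> (\<lambda>s. w x s) differentiable (at t within {0..T}))
   \<and> (\<forall>i. continuous_on (W \<times> {0<..T}) (\<lambda>(x,t). partial i (\<lambda>z. w z t) x))
   \<and> (\<forall>i j. continuous_on (W \<times> {0<..T}) (\<lambda>(x,t). partial j (\<lambda>y. partial i (\<lambda>z. w z t) y) x))
   \<and> continuous_on (W \<times> {0<..T}) (\<lambda>(x,t). vector_derivative (\<lambda>s. w x s) (at t within {0..T}))"

definition Lop :: "(real^'n::finite \<Rightarrow> real^'n^'n) \<Rightarrow> (real^'n \<Rightarrow> real^'n) \<Rightarrow> real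
     \<Rightarrow> (real^'n \<Rightarrow> real \<Rightarrow> real) \<Rightarrow> real^'n \<Rightarrow> real \<Rightarrow> real" where
  "Lop A b T w x t = vector_derivative (\<lambda>s. w x s) (at t within {0..T})
     - (\<Sum>i\<in>UNIV. partial i (\<lambda>y. (A y *v grad (\<lambda>z. w z t) y) $ i) x)
     - b x \<bullet> (A x *v grad (\<lambda>z. w z t) x)"

end

theory Submission
  imports Defs
begin



lemma partial_eq:
  fixes f :: "real^'n \<Rightarrow> real"
  assumes "(f has_derivative f') (at x)"
  shows "partial i f x = f' (axis i 1)"
proof -
  have l: "linear f'" using assms has_derivative_linear by blast
  have "((\<lambda>s. x + s *\<^sub>R axis i 1) has_derivative (\<lambda>s. s *\<^sub>R axis i 1)) (at 0)"
    by (auto intro!: derivative_eq_intros)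
  moreover have "(f has_derivative f') (at (x + 0 *\<^sub>R axis i 1))" using assms by simp
  ultimately have "((\<lambda>s. f (x + s *\<^sub>R axis i 1)) has_derivative (\<lambda>s. f' (s *\<^sub>R axis i 1))) (at 0)"
    using has_derivative_compose[of "\<lambda>s. x + s *\<^sub>R axis i 1" _ 0 UNIV f f'] by (simp add: o_def)
  then have "((\<lambda>s. f (x + s *\<^sub>R axis i 1)) has_derivative (\<lambda>s. f' (axis i 1) * s)) (at 0)"
    by (simp add: linear_scale[OF l] mult.commute)
  then have "((\<lambda>s. f (x + s *\<^sub>R axis i 1)) has_real_derivative f' (axis i 1)) (at 0)"
    by (simp add: has_field_derivative_def)
  then show ?thesis unfolding partial_def by (rule DERIV_imp_deriv)
qed

lemma grad_deriv:
  fixes f :: "real^'n \<Rightarrow> real"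
  assumes "(f has_derivative f') (at x)"
  shows "(f has_derivative (\<lambda>h. grad f x \<bullet> h)) (at x)"
proof -
  have l: "linear f'" using assms has_derivative_linear by blast
  have "f' h = grad f x \<bullet> h" for h
  proof -
    have "f' h = f' (\<Sum>i\<in>UNIV. (h$i) *s axis i 1)" by (simp add: basis_expansion)
    also have "\<dots> = (\<Sum>i\<in>UNIV. h$i * f' (axis i 1))"
      by (simp add: linear_sum[OF l] scalar_mult_eq_scaleR linear_scale[OF l])
    also have "\<dots> = grad f x \<bullet> h"
      by (simp add: grad_def inner_vec_def partial_eq[OF assms] mult.commute)
    finally show ?thesis .
  qed
  then show ?thesis using assms by (metis (no_types, lifting) ext) 
qed



lemma hfd:
  assumes "(f has_derivative (\<lambda>k. k * c)) F" shows "(f has_field_derivative c) F"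
proof -
  have "(\<lambda>k. k * c) = (*) c" by (rule ext) (rule mult.commute)
  then show ?thesis using assms by (simp add: has_field_derivative_def)
qed

lemma time_sign:
  fixes g :: "real \<Rightarrow> real"
  assumes "(g has_real_derivative D) (at t within {0..T})" "0 < t" "t \<le> T"
    "\<forall>s\<in>{0..t}. g s \<le> g t"
  shows "D \<ge> 0"
proof -
  have "(g has_real_derivative D) (at t within {0..t})"
    using assms(1) by (rule DERIV_subset) (use assms in auto)
  then have lim: "((\<lambda>y. (g y - g t) / (y - t)) \<longlongrightarrow> D) (at t within {0..t})"
    by (simp add: has_field_derivative_iff)
  have eq: "at t within {0..t} = at_left t" using assms(2) by (simp add: at_within_Icc_at_left)
  show ?thesis
  proof (rule tendsto_lowerbound[OF lim])
    show "\<forall>\<^sub>F y in at t within {0..t}. 0 \<le> (g y - g t) / (y - t)"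
      unfolding eventually_at_filter
      using assms(4) by (auto intro!: always_eventually divide_nonpos_neg)
    show "at t within {0..t} \<noteq> bot" unfolding eq by simp
  qed
qed

lemma second_order_1d:
  fixes \<phi> \<psi> :: "real \<Rightarrow> real"
  assumes "d > 0" "\<And>s. \<bar>s\<bar> < d \<Longrightarrow> (\<phi> has_real_derivative \<psi> s) (at s)" "\<psi> 0 = 0"
    "(\<psi> has_real_derivative c) (at 0)" "\<And>s. \<bar>s\<bar> < d \<Longrightarrow> \<phi> s \<le> \<phi> 0"
  shows "c \<le> 0"
proof (rule ccontr)
  assume "\<not> c \<le> 0"
  then have "c > 0" by simp
  from DERIV_pos_inc_right[OF assms(4) this] obtain d' where d': "d' > 0" "\<And>h. h > 0 \<Longrightarrow> h < d' \<Longrightarrow> \<psi> 0 < \<psi> (0 + h)"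
    by blast
  define s where "s = min d d' / 2"
  have s: "0 < s" "s < d" "s < d'" using assms(1) d'(1) by (auto simp: s_def)
  obtain z where z: "z > 0" "z < s" "\<phi> s - \<phi> 0 = (s - 0) * \<psi> z"
    using MVT2[of 0 s \<phi> \<psi>] s assms(2) by force
  have "\<psi> z > 0" using d'(2)[of z] z s assms(3) by simp
  then have "\<phi> s - \<phi> 0 > 0" using z s by simp
  moreover have "\<phi> s \<le> \<phi> 0" using assms(5)[of s] s by simp
  ultimately show False by simp
qed

lemma second_order:
  fixes Z :: "real^'n \<Rightarrow> real" and Gz :: "real^'n \<Rightarrow> real^'n"
  assumes e: "e > 0"
    and dZ: "\<And>y. y \<in> ball x e \<Longrightarrow> (Z has_derivative (\<lambda>h. Gz y \<bullet> h)) (at y)"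
    and dG: "(Gz has_derivative H) (at x)"
    and mx: "\<And>y. y \<in> ball x e \<Longrightarrow> Z y \<le> Z x"
  shows "Gz x = 0" "u \<bullet> H u \<le> 0"
proof -
  have "(\<lambda>h. Gz x \<bullet> h) = (\<lambda>v. 0)"
    by (rule differential_zero_maxmin[of x "ball x e" Z]) (use e dZ mx in auto)
  then have "Gz x \<bullet> Gz x = 0" by metis
  then show G0: "Gz x = 0" by simp
  have lH: "linear H" using dG has_derivative_linear by blast
  show "u \<bullet> H u \<le> 0"
  proof (cases "u = 0")
    case True then show ?thesis by (simp add: linear_0[OF lH])
  next
    case False
    then have nu: "norm u > 0" by simp
    define d where "d = e / norm u"
    have d: "d > 0" using e nu by (simp add: d_def)
    have inball: "x + s *\<^sub>R u \<in> ball x e" if "\<bar>s\<bar> < d" for s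
    proof -
      have "norm (s *\<^sub>R u) = \<bar>s\<bar> * norm u" by simp
      also have "\<dots> < d * norm u" using that nu by (simp add: mult_strict_right_mono)
      also have "\<dots> = e" using nu by (simp add: d_def)
      finally show ?thesis by (simp add: dist_norm)
    qed
    have line: "((\<lambda>s. x + s *\<^sub>R u) has_derivative (\<lambda>k. k *\<^sub>R u)) (at s)" for s
      by (auto intro!: derivative_eq_intros)
    have dphi: "((\<lambda>s. Z (x + s *\<^sub>R u)) has_real_derivative (Gz (x + s *\<^sub>R u) \<bullet> u)) (at s)"
      if "\<bar>s\<bar> < d" for s
    proof -
      have "((\<lambda>s. Z (x + s *\<^sub>R u)) has_derivative (\<lambda>k. Gz (x + s *\<^sub>R u) \<bullet> (k *\<^sub>R u))) (at s)"
        using has_derivative_compose[OF line dZ[OF inball[OF that]]] by (simp add: o_def)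
      then show ?thesis by (intro hfd) simp
    qed
    have dpsi: "((\<lambda>s. Gz (x + s *\<^sub>R u) \<bullet> u) has_real_derivative (H u \<bullet> u)) (at 0)"
    proof -
      have "((\<lambda>s. Gz (x + s *\<^sub>R u)) has_derivative (\<lambda>k. H (k *\<^sub>R u))) (at 0)"
        using has_derivative_compose[OF line[of 0], of Gz H] dG by (simp add: o_def)
      then have "((\<lambda>s. Gz (x + s *\<^sub>R u) \<bullet> u) has_derivative (\<lambda>k. H (k *\<^sub>R u) \<bullet> u)) (at 0)"
        by (auto intro!: derivative_eq_intros)
      then show ?thesis by (intro hfd) (simp add: linear_scale[OF lH])
    qed
    have "H u \<bullet> u \<le> 0"
      by (rule second_order_1d[OF d dphi _ dpsi]) (use G0 mx inball in auto)
    then show ?thesis by (simp add: inner_commute)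
  qed
qed



lemma outer_mv: "outer u v *v z = (v \<bullet> z) *\<^sub>R u"
  by (simp add: outer_def matrix_vector_mult_def vec_eq_iff inner_vec_def sum_distrib_left
      sum_distrib_right algebra_simps)

lemma matrix_inv_unique':
  fixes B M :: "real^'n^'n"
  assumes "B ** M = mat 1" "M ** B = mat 1"
  shows "matrix_inv B = M"
proof -
  have "\<exists>A'. B ** A' = mat 1 \<and> A' ** B = mat 1" using assms by blast
  then have "B ** matrix_inv B = mat 1 \<and> matrix_inv B ** B = mat 1"
    unfolding matrix_inv_def by (rule someI_ex)
  then have "matrix_inv B = matrix_inv B ** (B ** M)" using assms by (simp add: matrix_mul_rid)
  also have "\<dots> = (matrix_inv B ** B) ** M" by (simp add: matrix_mul_assoc)
  also have "\<dots> = M" using \<open>B ** matrix_inv B = mat 1 \<and> matrix_inv B ** B = mat 1\<close>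
    by (simp add: matrix_mul_lid)
  finally show ?thesis .
qed

lemma mat_from_mv:
  fixes B M :: "real^'n^'n"
  assumes "\<And>v. B *v (M *v v) = v"
  shows "B ** M = mat 1"
  using assms by (simp add: matrix_eq matrix_vector_mul_assoc[symmetric])

lemma linear_basis_sum:
  fixes H :: "real^'n \<Rightarrow> real^'n"
  assumes "linear H"
  shows "H x = (\<Sum>i\<in>UNIV. x$i *\<^sub>R H (axis i 1))"
proof -
  have "H x = H (\<Sum>i\<in>UNIV. x$i *\<^sub>R axis i 1)"
    using basis_expansion[of x] by (simp add: scalar_mult_eq_scaleR)
  also have "\<dots> = (\<Sum>i\<in>UNIV. x$i *\<^sub>R H (axis i 1))"
    by (simp add: linear_sum[OF assms] linear_scale[OF assms])
  finally show ?thesis .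
qed

lemma trace_nonpos:
  fixes H :: "real^'n \<Rightarrow> real^'n" and x :: "real^'n"
  assumes lH: "linear H" and nsd: "\<And>u. u \<bullet> H u \<le> 0"
  shows "(\<Sum>i\<in>UNIV. a^2 * (H (axis i 1))$i + (2*a*b + b^2*(norm x)^2) * ((x \<bullet> H (axis i 1)) * x$i)) \<le> 0"
proof -
  define P where "P i = a *\<^sub>R axis i (1::real) + (b * x$i) *\<^sub>R x" for i
  have trm: "P i \<bullet> H (P i) = a^2 * (H (axis i 1))$i + a*b*(x$i * (H x)$i) + a*b*((x \<bullet> H (axis i 1)) * x$i)
     + b^2 * (x$i)^2 * (x \<bullet> H x)" for i
    by (simp add: P_def linear_add[OF lH] linear_scale[OF lH] inner_add_left inner_add_right
        inner_axis' algebra_simps power2_eq_square)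
  have s1: "(\<Sum>i\<in>UNIV. x$i * (H x)$i) = x \<bullet> H x" by (simp add: inner_vec_def)
  have s2: "(\<Sum>i\<in>UNIV. (x \<bullet> H (axis i 1)) * x$i) = x \<bullet> H x"
  proof -
    have "(\<Sum>i\<in>UNIV. (x \<bullet> H (axis i 1)) * x$i) = x \<bullet> (\<Sum>i\<in>UNIV. x$i *\<^sub>R H (axis i 1))"
      by (simp add: inner_sum_right mult.commute)
    then show ?thesis using linear_basis_sum[OF lH, of x] by simp
  qed
  have s2': "(\<Sum>i\<in>UNIV. x$i * (x \<bullet> H (axis i 1))) = x \<bullet> H x" using s2 by (simp add: mult.commute)
  have s3: "(\<Sum>i\<in>UNIV. (x$i)^2) = (norm x)^2"
    by (simp add: norm_eq_sqrt_inner inner_vec_def power2_eq_square sum_nonneg)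
  have "(\<Sum>i\<in>UNIV. a^2 * (H (axis i 1))$i + (2*a*b + b^2*(norm x)^2) * ((x \<bullet> H (axis i 1)) * x$i))
      = a^2 * (\<Sum>i\<in>UNIV. (H (axis i 1))$i) + (2*a*b + b^2*(norm x)^2) * (x \<bullet> H x)"
    by (simp add: sum.distrib sum_distrib_left[symmetric] s2)
  also have "\<dots> = (\<Sum>i\<in>UNIV. P i \<bullet> H (P i))"
    by (simp add: trm sum.distrib sum_distrib_left[symmetric] s1 s2 s2' sum_distrib_right[symmetric] s3
        algebra_simps)
  also have "\<dots> \<le> 0" by (rule sum_nonpos) (rule nsd)
  finally show ?thesis .
qed



lemma gfun_deriv:
  assumes "s > 0"
  shows "(gfun a0 a al N has_real_derivative (\<Sum>j=1..N. al j * s powr (al j - 1) * a j)) (at s)"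
  unfolding gfun_def[abs_def] using assms
  by (auto intro!: derivative_eq_intros DERIV_sum)

lemma gfun_deriv_times:
  assumes "s > 0"
  shows "deriv (gfun a0 a al N) s * s = gfun 0 (\<lambda>j. a j * al j) al N s"
proof -
  have "deriv (gfun a0 a al N) s = (\<Sum>j=1..N. al j * s powr (al j - 1) * a j)"
    using gfun_deriv[OF assms] by (rule DERIV_imp_deriv)
  moreover have "(\<Sum>j=1..N. al j * s powr (al j - 1) * a j * s) = (\<Sum>j=1..N. a j * al j * s powr al j)"
    using assms by (intro sum.cong) (simp_all add: powr_diff)
  ultimately show ?thesis
    by (simp add: gfun_def sum_distrib_right)
qed

lemma gfun_zero_coef: "gfun 0 (\<lambda>j. a j * al j) al N 0 = 0"
  by (simp add: gfun_def)

lemma gfun_ge: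
  assumes "\<forall>j\<in>{1..N}. a j \<ge> 0" 
  shows "gfun a0 a al N s \<ge> a0"
  unfolding gfun_def using assms by (auto intro!: sum_nonneg)

lemma gfun_mono:
  assumes "\<forall>j\<in>{1..N}. a j \<ge> 0" "\<forall>j\<in>{1..N}. al j \<ge> 0" "0 \<le> s" "s \<le> t"
  shows "gfun a0 a al N s \<le> gfun a0 a al N t"
  unfolding gfun_def using assms by (auto intro!: sum_mono mult_left_mono powr_mono2)

lemma gfun_comp_deriv:
  assumes "r > 0" "k \<ge> 0"
  shows "\<exists>D. ((\<lambda>r. gfun a0 a al N (k * r powr p)) has_real_derivative D) (at r)"
proof (cases "k = 0")
  case True
  then show ?thesis by (auto intro!: exI DERIV_const)
next
  case False
  then have k: "k > 0" using assms by simp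
  show ?thesis unfolding gfun_def using assms k
    by (intro exI) (auto intro!: derivative_eq_intros DERIV_sum)
qed




lemma cont_bound:
  fixes q :: "real \<Rightarrow> real"
  assumes "continuous_on {a..b} q"
  shows "\<exists>B. \<forall>s\<in>{a..b}. \<bar>q s\<bar> \<le> B"
proof -
  have "bounded (q ` {a..b})" using assms compact_continuous_image compact_imp_bounded by blast
  then show ?thesis unfolding bounded_real by auto
qed

lemma cont_pos_min:
  fixes q :: "real \<Rightarrow> real"
  assumes "continuous_on {a..b} q" "\<forall>s\<in>{a..b}. q s > 0"
  shows "\<exists>m>0. \<forall>s\<in>{a..b}. m \<le> q s"
proof (cases "a \<le> b")
  case True
  then obtain x where "x \<in> {a..b}" "\<forall>y\<in>{a..b}. q x \<le> q y"
    using continuous_attains_inf[of "{a..b}" q] assms by auto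
  then show ?thesis using assms by force
next
  case False then show ?thesis by (intro exI[of _ 1]) auto
qed


lemma Gjac_scaled:
  fixes y v :: "real^'n"
  assumes y: "norm y > 0" and dg: "\<forall>s>0. deriv g s * s = gp s" and gp0: "gp 0 = 0"
  shows "Gjac g (k *\<^sub>R y) *v v = g (\<bar>k\<bar> * norm y) *\<^sub>R v + (gp (\<bar>k\<bar> * norm y) / (norm y)^2 * (y \<bullet> v)) *\<^sub>R y"
proof (cases "k = 0")
  case True
  then show ?thesis by (simp add: Gjac_def gp0 scaleR_matrix_vector_assoc[symmetric])
next
  case False
  define s where "s = \<bar>k\<bar> * norm y"
  have s: "s > 0" using False y by (simp add: s_def)
  have nu: "norm (k *\<^sub>R y) = s" by (simp add: s_def)
  have u0: "k *\<^sub>R y \<noteq> 0" using False y by auto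
  have "Gjac g (k *\<^sub>R y) *v v = g s *\<^sub>R v + (deriv g s / s * (k^2 * (y \<bullet> v))) *\<^sub>R y"
    using u0 nu by (simp add: Gjac_def matrix_vector_mult_add_rdistrib scaleR_matrix_vector_assoc[symmetric]
        outer_mv power2_eq_square algebra_simps)
  also have "deriv g s / s * (k^2 * (y \<bullet> v)) = gp s / (norm y)^2 * (y \<bullet> v)"
  proof -
    have e1: "gp s = deriv g s * s" using dg s by simp
    have e2: "s^2 = k^2 * (norm y)^2" by (simp add: s_def power_mult_distrib)
    have e3: "k^2 / s = s / (norm y)^2" using e2 s y by (simp add: field_simps power2_eq_square[of s])
    have "deriv g s / s * (k^2 * (y \<bullet> v)) = deriv g s * (k^2 / s) * (y \<bullet> v)" by simp
    also have "\<dots> = deriv g s * (s / (norm y)^2) * (y \<bullet> v)" by (simp only: e3)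
    also have "\<dots> = gp s / (norm y)^2 * (y \<bullet> v)" by (simp add: e1)
    finally show ?thesis .
  qed
  finally show ?thesis by (simp add: s_def)
qed

locale pms =

  fixes a10 a20 :: real and a1 a2 al1 al2 :: "nat \<Rightarrow> real" and N1 N2 :: nat
    and f1 f2 pcd :: "real \<Rightarrow> real"
    and r0 c1 c2 s0 slo shi T :: real and Shat :: "real \<Rightarrow> real"
    and f0 w :: "real^'n::finite \<Rightarrow> real \<Rightarrow> real" and w0 :: "real^'n \<Rightarrow> real"
    and G :: "real^'n \<Rightarrow> real \<Rightarrow> real"
    and n :: real and g1 g2 F1 F2 :: "real \<Rightarrow> real"
    and Sstar :: "real^'n \<Rightarrow> real" and u1 u2 b :: "real^'n \<Rightarrow> real^'n"
    and B A :: "real^'n \<Rightarrow> real^'n^'n" and U :: "(real^'n) set"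
  assumes n_def: "n = real CARD('n)"
    and g1_def: "g1 = gfun a10 a1 al1 N1" and g2_def: "g2 = gfun a20 a2 al2 N2"
    and F1_def: "F1 = (\<lambda>s. 1 / (pcd s * f1 s))" and F2_def: "F2 = (\<lambda>s. 1 / (pcd s * f2 s))"
    and Sstar_def: "Sstar = (\<lambda>x::real^'n. Shat (norm x))"
    and u1_def: "u1 = (\<lambda>x::real^'n. (c1 * norm x powr (- n)) *\<^sub>R x)"
    and u2_def: "u2 = (\<lambda>x::real^'n. (c2 * norm x powr (- n)) *\<^sub>R x)"
    and B_def: "B = (\<lambda>x. F1 (Sstar x) *\<^sub>R Gjac g1 (u1 x) + F2 (Sstar x) *\<^sub>R Gjac g2 (u2 x))"
    and A_def: "A = (\<lambda>x. matrix_inv (B x))"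
    and b_def: "b = (\<lambda>x. deriv F2 (Sstar x) *\<^sub>R (g2 (norm (u2 x)) *\<^sub>R u2 x)
                 - deriv F1 (Sstar x) *\<^sub>R (g1 (norm (u1 x)) *\<^sub>R u1 x))"
    and U_def: "U = {x::real^'n. norm x > r0}"
    and dim: "CARD('n) \<ge> 2"
    and g1_adm: "g_admissible a10 a1 al1 N1" and g2_adm: "g_admissible a20 a2 al2 N2"
    and f1_cont: "continuous_on {0..1} f1" and f2_cont: "continuous_on {0..1} f2"
    and f1_diff: "\<forall>s\<in>{0<..<1}. f1 differentiable (at s)"
    and f2_diff: "\<forall>s\<in>{0<..<1}. f2 differentiable (at s)"
    and f1_C1: "continuous_on {0<..<1} (deriv f1)" and f2_C1: "continuous_on {0<..<1} (deriv f2)"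
    and f1_0: "f1 0 = 0" and f2_1: "f2 1 = 0"
    and f1_mono: "\<forall>s\<in>{0<..<1}. deriv f1 s > 0" and f2_mono: "\<forall>s\<in>{0<..<1}. deriv f2 s < 0"
    and pcd_diff: "\<forall>s\<in>{0<..<1}. pcd differentiable (at s)"
    and pcd_C1: "continuous_on {0<..<1} (deriv pcd)"
    and pcd_pos: "\<forall>s\<in>{0<..<1}. pcd s > 0"
    and r0_pos: "r0 > 0" and c_nz: "c1\<^sup>2 + c2\<^sup>2 > 0" and s0: "0 < s0" "s0 < 1"
    and Shat_ode: "\<forall>r\<ge>r0. (Shat has_real_derivative
          (g2 \<bar>c2 * r powr (1 - n)\<bar> * (c2 * r powr (1 - n)) * F2 (Shat r)
           - g1 \<bar>c1 * r powr (1 - n)\<bar> * (c1 * r powr (1 - n)) * F1 (Shat r))) (at r within {r0..})"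
    and Shat_init: "Shat r0 = s0"
    and Shat_bounds: "0 < slo" "shi < 1" "\<forall>r\<ge>r0. slo \<le> Shat r \<and> Shat r \<le> shi"
    and T_pos: "T > 0"
    and f0_cont: "continuous_on (closure U \<times> {0..T}) (\<lambda>(x,t). f0 x t)"
    and w0_cont: "continuous_on (closure U) w0"
    and G_cont: "continuous_on ({x. norm x = r0} \<times> {0..T}) (\<lambda>(x,t). G x t)"
    and w_C21: "C21 U T w"
    and w_cont: "continuous_on (closure U \<times> {0..T}) (\<lambda>(x,t). w x t)"
    and w_bdd: "\<exists>M. \<forall>x\<in>closure U. \<forall>t\<in>{0..T}. \<bar>w x t\<bar> \<le> M"
    and w_eq: "\<forall>x\<in>U. \<forall>t\<in>{0<..T}. Lop A b T w x t = f0 x t"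
    and w_init: "\<forall>x\<in>U. w x 0 = w0 x"
    and w_bdry: "\<forall>x. norm x = r0 \<longrightarrow> (\<forall>t\<in>{0<..T}. w x t = G x t)"
    and w0_lim: "(w0 \<longlongrightarrow> 0) at_infinity"
    and f0_lim: "((\<lambda>x. SUP t\<in>{0..T}. \<bar>f0 x t\<bar>) \<longlongrightarrow> 0) at_infinity"

begin

lemma Shat_range: "r \<ge> r0 \<Longrightarrow> Shat r \<in> {slo..shi} \<and> 0 < Shat r \<and> Shat r < 1"
  using Shat_bounds by force

lemma slo_shi: "0 < slo" "slo \<le> shi" "shi < 1"
  using Shat_bounds r0_pos by force+

lemma f1_pos: assumes "0 < s" "s < 1" shows "f1 s > 0"
proof -
  obtain l z where z: "0 < z" "z < s" "DERIV f1 z :> l" "f1 s - f1 0 = (s - 0) * l"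
    using MVT[of 0 s f1] assms f1_diff continuous_on_subset[OF f1_cont, of "{0..s}"] by force
  have "l = deriv f1 z" using z(3) by (simp add: DERIV_imp_deriv)
  then have "l > 0" using f1_mono z assms by auto
  then show ?thesis using z assms f1_0 by simp
qed

lemma f2_pos: assumes "0 < s" "s < 1" shows "f2 s > 0"
proof -
  obtain l z where z: "s < z" "z < 1" "DERIV f2 z :> l" "f2 1 - f2 s = (1 - s) * l"
    using MVT[of s 1 f2] assms f2_diff continuous_on_subset[OF f2_cont, of "{s..1}"] by force
  have "l = deriv f2 z" using z(3) by (simp add: DERIV_imp_deriv)
  then have "l < 0" using f2_mono z assms by auto
  then have "(1 - s) * l < 0" using assms by (simp add: mult_pos_neg)
  then show ?thesis using z assms f2_1 by simp
qed

definition DF1 :: "real \<Rightarrow> real" where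
  "DF1 s = - (deriv pcd s * f1 s + pcd s * deriv f1 s) / (pcd s * f1 s)^2"
definition DF2 :: "real \<Rightarrow> real" where
  "DF2 s = - (deriv pcd s * f2 s + pcd s * deriv f2 s) / (pcd s * f2 s)^2"

lemma F1_deriv: assumes "0 < s" "s < 1" shows "(F1 has_real_derivative DF1 s) (at s)"
proof -
  have p: "DERIV pcd s :> deriv pcd s" using pcd_diff assms DERIV_deriv_iff_real_differentiable by auto
  have f: "DERIV f1 s :> deriv f1 s" using f1_diff assms DERIV_deriv_iff_real_differentiable by auto
  have nz: "pcd s * f1 s \<noteq> 0" using pcd_pos f1_pos[OF assms] assms by force
  show ?thesis unfolding F1_def DF1_def
    using p f nz by (auto intro!: derivative_eq_intros simp: field_simps power2_eq_square)
qed

lemma F2_deriv: assumes "0 < s" "s < 1" shows "(F2 has_real_derivative DF2 s) (at s)"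
proof -
  have p: "DERIV pcd s :> deriv pcd s" using pcd_diff assms DERIV_deriv_iff_real_differentiable by auto
  have f: "DERIV f2 s :> deriv f2 s" using f2_diff assms DERIV_deriv_iff_real_differentiable by auto
  have nz: "pcd s * f2 s \<noteq> 0" using pcd_pos f2_pos[OF assms] assms by force
  show ?thesis unfolding F2_def DF2_def
    using p f nz by (auto intro!: derivative_eq_intros simp: field_simps power2_eq_square)
qed

lemma cont_at_01:
  assumes "\<forall>s\<in>{0<..<1}. q differentiable (at s)"
  shows "continuous_on {slo..shi} q"
  using assms slo_shi
  by (intro continuous_at_imp_continuous_on) (auto intro: differentiable_imp_continuous_within)

lemma F_bounds:
  "\<exists>Flo Fhi DFb. 0 < Flo \<and> (\<forall>s\<in>{slo..shi}. Flo \<le> F1 s \<and> F1 s \<le> Fhi \<and> Flo \<le> F2 s \<and> F2 s \<le> Fhi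
      \<and> \<bar>deriv F1 s\<bar> \<le> DFb \<and> \<bar>deriv F2 s\<bar> \<le> DFb)"
proof -
  have cp: "continuous_on {slo..shi} pcd" by (rule cont_at_01[OF pcd_diff])
  have cf1: "continuous_on {slo..shi} f1" by (rule cont_at_01[OF f1_diff])
  have cf2: "continuous_on {slo..shi} f2" by (rule cont_at_01[OF f2_diff])
  have sub: "{slo..shi} \<subseteq> {0<..<1}" using slo_shi by auto
  have cdp: "continuous_on {slo..shi} (deriv pcd)" using continuous_on_subset[OF pcd_C1 sub] .
  have cdf1: "continuous_on {slo..shi} (deriv f1)" using continuous_on_subset[OF f1_C1 sub] .
  have cdf2: "continuous_on {slo..shi} (deriv f2)" using continuous_on_subset[OF f2_C1 sub] .
  have pos1: "\<forall>s\<in>{slo..shi}. pcd s * f1 s > 0" using sub pcd_pos f1_pos by auto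
  have pos2: "\<forall>s\<in>{slo..shi}. pcd s * f2 s > 0" using sub pcd_pos f2_pos by auto
  obtain m1 where m1: "m1 > 0" "\<forall>s\<in>{slo..shi}. m1 \<le> pcd s * f1 s"
    using cont_pos_min[OF continuous_on_mult[OF cp cf1] pos1] by auto
  obtain m2 where m2: "m2 > 0" "\<forall>s\<in>{slo..shi}. m2 \<le> pcd s * f2 s"
    using cont_pos_min[OF continuous_on_mult[OF cp cf2] pos2] by auto
  obtain M1 where M1: "\<forall>s\<in>{slo..shi}. \<bar>pcd s * f1 s\<bar> \<le> M1"
    using cont_bound[OF continuous_on_mult[OF cp cf1]] by auto
  obtain M2 where M2: "\<forall>s\<in>{slo..shi}. \<bar>pcd s * f2 s\<bar> \<le> M2"
    using cont_bound[OF continuous_on_mult[OF cp cf2]] by auto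
  have cD1: "continuous_on {slo..shi} DF1" unfolding DF1_def using cp cf1 cdp cdf1 pos1
    by (intro continuous_intros) auto
  have cD2: "continuous_on {slo..shi} DF2" unfolding DF2_def using cp cf2 cdp cdf2 pos2
    by (intro continuous_intros) auto
  obtain D1 where D1: "\<forall>s\<in>{slo..shi}. \<bar>DF1 s\<bar> \<le> D1" using cont_bound[OF cD1] by auto
  obtain D2 where D2: "\<forall>s\<in>{slo..shi}. \<bar>DF2 s\<bar> \<le> D2" using cont_bound[OF cD2] by auto
  have dd: "deriv F1 s = DF1 s \<and> deriv F2 s = DF2 s" if "s \<in> {slo..shi}" for s
  proof -
    have "0 < s" "s < 1" using sub that by auto
    then show ?thesis using DERIV_imp_deriv F1_deriv F2_deriv by blast
  qed
  define Flo where "Flo = min (1/M1) (1/M2)"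
  define Fhi where "Fhi = max (1/m1) (1/m2)"
  have "0 < Flo" using m1 m2 M1 M2 pos1 pos2 slo_shi unfolding Flo_def
    by (smt (verit, best) atLeastAtMost_iff divide_pos_pos)
  moreover have "\<forall>s\<in>{slo..shi}. Flo \<le> F1 s \<and> F1 s \<le> Fhi \<and> Flo \<le> F2 s \<and> F2 s \<le> Fhi
      \<and> \<bar>deriv F1 s\<bar> \<le> max D1 D2 \<and> \<bar>deriv F2 s\<bar> \<le> max D1 D2"
  proof
    fix s assume s: "s \<in> {slo..shi}"
    have a1: "m1 \<le> pcd s * f1 s" "pcd s * f1 s \<le> M1" "pcd s * f1 s > 0" using m1 M1 pos1 s by force+
    have a2: "m2 \<le> pcd s * f2 s" "pcd s * f2 s \<le> M2" "pcd s * f2 s > 0" using m2 M2 pos2 s by force+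
    have "1/M1 \<le> F1 s" "F1 s \<le> 1/m1" unfolding F1_def using a1 m1
      by (auto intro!: divide_left_mono simp: mult_pos_pos)
    moreover have "1/M2 \<le> F2 s" "F2 s \<le> 1/m2" unfolding F2_def using a2 m2
      by (auto intro!: divide_left_mono simp: mult_pos_pos)
    ultimately show "Flo \<le> F1 s \<and> F1 s \<le> Fhi \<and> Flo \<le> F2 s \<and> F2 s \<le> Fhi
      \<and> \<bar>deriv F1 s\<bar> \<le> max D1 D2 \<and> \<bar>deriv F2 s\<bar> \<le> max D1 D2"
    proof -
      have "\<bar>DF1 s\<bar> \<le> D1" "\<bar>DF2 s\<bar> \<le> D2" using D1 D2 s by blast+
      then show ?thesis using dd[OF s] \<open>1/M1 \<le> F1 s\<close> \<open>F1 s \<le> 1/m1\<close> \<open>1/M2 \<le> F2 s\<close> \<open>F2 s \<le> 1/m2\<close>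
        unfolding Flo_def Fhi_def by auto
    qed
  qed
  ultimately show ?thesis by blast
qed


lemma adm1: "a10 > 0" "\<forall>j\<in>{1..N1}. a1 j \<ge> 0" "\<forall>j\<in>{1..N1}. al1 j > 0"
  using g1_adm unfolding g_admissible_def by auto
lemma adm2: "a20 > 0" "\<forall>j\<in>{1..N2}. a2 j \<ge> 0" "\<forall>j\<in>{1..N2}. al2 j > 0"
  using g2_adm unfolding g_admissible_def by auto

definition sf :: "real \<Rightarrow> real \<Rightarrow> real" where "sf c r = \<bar>c\<bar> * r powr (1 - n)"
definition gp1 where "gp1 = gfun 0 (\<lambda>j. a1 j * al1 j) al1 N1"
definition gp2 where "gp2 = gfun 0 (\<lambda>j. a2 j * al2 j) al2 N2"
definition alpha where "alpha r = F1 (Shat r) * g1 (sf c1 r) + F2 (Shat r) * g2 (sf c2 r)"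
definition theta where "theta r = F1 (Shat r) * gp1 (sf c1 r) + F2 (Shat r) * gp2 (sf c2 r)"
definition beta where "beta r = alpha r + theta r"

lemma dg1: "\<forall>s>0. deriv g1 s * s = gp1 s" unfolding g1_def gp1_def by (simp add: gfun_deriv_times)
lemma dg2: "\<forall>s>0. deriv g2 s * s = gp2 s" unfolding g2_def gp2_def by (simp add: gfun_deriv_times)
lemma gp10: "gp1 0 = 0" unfolding gp1_def by (rule gfun_zero_coef)
lemma gp20: "gp2 0 = 0" unfolding gp2_def by (rule gfun_zero_coef)

lemma sf_eq: "norm y > 0 \<Longrightarrow> \<bar>c * norm y powr (- n)\<bar> * norm y = sf c (norm y)"
  by (simp add: sf_def abs_mult powr_diff[of "norm y" 1 n] field_simps powr_minus)

lemma B_mv: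
  assumes "norm y > 0"
  shows "B y *v v = alpha (norm y) *\<^sub>R v + (theta (norm y) / (norm y)^2 * (y \<bullet> v)) *\<^sub>R y"
proof -
  have "B y *v v = F1 (Shat (norm y)) *\<^sub>R (Gjac g1 (u1 y) *v v) + F2 (Shat (norm y)) *\<^sub>R (Gjac g2 (u2 y) *v v)"
    by (simp add: B_def Sstar_def matrix_vector_mult_add_rdistrib scaleR_matrix_vector_assoc)
  also have "\<dots> = alpha (norm y) *\<^sub>R v + (theta (norm y) / (norm y)^2 * (y \<bullet> v)) *\<^sub>R y"
    unfolding u1_def u2_def
    using Gjac_scaled[OF assms dg1 gp10] Gjac_scaled[OF assms dg2 gp20] sf_eq[OF assms]
    by (simp add: alpha_def theta_def algebra_simps add_divide_distrib)
  finally show ?thesis .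
qed


lemma sf_nonneg: "sf c r \<ge> 0" by (simp add: sf_def)

lemma sf_mono: assumes "r0 \<le> r" shows "sf c r \<le> sf c r0"
proof -
  have "r powr (1 - n) \<le> r0 powr (1 - n)" using assms r0_pos dim n_def by (intro powr_mono2') auto
  then show ?thesis by (simp add: sf_def mult_left_mono)
qed

lemma g1_bounds: assumes "0 \<le> s" "s \<le> t" shows "a10 \<le> g1 s \<and> g1 s \<le> g1 t \<and> 0 \<le> gp1 s \<and> gp1 s \<le> gp1 t"
proof -
  have c1: "\<forall>j\<in>{1..N1}. a1 j \<ge> 0" "\<forall>j\<in>{1..N1}. al1 j \<ge> 0" "\<forall>j\<in>{1..N1}. a1 j * al1 j \<ge> 0"
    using adm1 by (auto simp: less_imp_le)
  have "a10 \<le> g1 s" unfolding g1_def by (rule gfun_ge[OF c1(1)])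
  moreover have "g1 s \<le> g1 t" unfolding g1_def by (rule gfun_mono[OF c1(1) c1(2) assms])
  moreover have "0 \<le> gp1 s" unfolding gp1_def by (rule gfun_ge[OF c1(3)])
  moreover have "gp1 s \<le> gp1 t" unfolding gp1_def by (rule gfun_mono[OF c1(3) c1(2) assms])
  ultimately show ?thesis by blast
qed
lemma g2_bounds: assumes "0 \<le> s" "s \<le> t" shows "a20 \<le> g2 s \<and> g2 s \<le> g2 t \<and> 0 \<le> gp2 s \<and> gp2 s \<le> gp2 t"
proof -
  have c1: "\<forall>j\<in>{1..N2}. a2 j \<ge> 0" "\<forall>j\<in>{1..N2}. al2 j \<ge> 0" "\<forall>j\<in>{1..N2}. a2 j * al2 j \<ge> 0"
    using adm2 by (auto simp: less_imp_le)
  have "a20 \<le> g2 s" unfolding g2_def by (rule gfun_ge[OF c1(1)])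
  moreover have "g2 s \<le> g2 t" unfolding g2_def by (rule gfun_mono[OF c1(1) c1(2) assms])
  moreover have "0 \<le> gp2 s" unfolding gp2_def by (rule gfun_ge[OF c1(3)])
  moreover have "gp2 s \<le> gp2 t" unfolding gp2_def by (rule gfun_mono[OF c1(3) c1(2) assms])
  ultimately show ?thesis by blast
qed

lemma beta_bounds:
  "\<exists>blo bhi. 0 < blo \<and> (\<forall>r\<ge>r0. blo \<le> alpha r \<and> alpha r \<le> beta r \<and> beta r \<le> bhi)"
proof -
  obtain Flo Fhi DFb where F: "0 < Flo" "\<forall>s\<in>{slo..shi}. Flo \<le> F1 s \<and> F1 s \<le> Fhi \<and> Flo \<le> F2 s \<and> F2 s \<le> Fhi"
    using F_bounds by blast
  define blo where "blo = Flo * (a10 + a20)"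
  define bhi where "bhi = Fhi * (g1 (sf c1 r0) + gp1 (sf c1 r0) + g2 (sf c2 r0) + gp2 (sf c2 r0))"
  have "blo \<le> alpha r \<and> alpha r \<le> beta r \<and> beta r \<le> bhi" if r: "r \<ge> r0" for r
  proof -
    have S: "Shat r \<in> {slo..shi}" using Shat_range[OF r] by blast
    have Fr: "Flo \<le> F1 (Shat r)" "F1 (Shat r) \<le> Fhi" "Flo \<le> F2 (Shat r)" "F2 (Shat r) \<le> Fhi"
      using F(2) S by blast+
    have G1: "a10 \<le> g1 (sf c1 r)" "g1 (sf c1 r) \<le> g1 (sf c1 r0)" "0 \<le> gp1 (sf c1 r)" "gp1 (sf c1 r) \<le> gp1 (sf c1 r0)"
      using g1_bounds[OF sf_nonneg sf_mono[OF r]] by auto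
    have G2: "a20 \<le> g2 (sf c2 r)" "g2 (sf c2 r) \<le> g2 (sf c2 r0)" "0 \<le> gp2 (sf c2 r)" "gp2 (sf c2 r) \<le> gp2 (sf c2 r0)"
      using g2_bounds[OF sf_nonneg sf_mono[OF r]] by auto
    have a: "Flo * a10 \<le> F1 (Shat r) * g1 (sf c1 r)" "Flo * a20 \<le> F2 (Shat r) * g2 (sf c2 r)"
      using F(1) Fr G1 G2 adm1 adm2 by (auto intro!: mult_mono)
    have th: "0 \<le> theta r" unfolding theta_def using F(1) Fr G1 G2 by auto
    have up: "F1 (Shat r) * g1 (sf c1 r) \<le> Fhi * g1 (sf c1 r0)" "F2 (Shat r) * g2 (sf c2 r) \<le> Fhi * g2 (sf c2 r0)"
      "F1 (Shat r) * gp1 (sf c1 r) \<le> Fhi * gp1 (sf c1 r0)" "F2 (Shat r) * gp2 (sf c2 r) \<le> Fhi * gp2 (sf c2 r0)"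
      using F(1) Fr G1 G2 adm1 adm2 by (auto intro!: mult_mono)
    show ?thesis using a th up unfolding beta_def alpha_def theta_def blo_def bhi_def
      by (simp add: algebra_simps)
  qed
  moreover have "0 < blo" using F(1) adm1 adm2 by (simp add: blo_def)
  ultimately show ?thesis by blast
qed

lemma alpha_pos: "r \<ge> r0 \<Longrightarrow> alpha r > 0" using beta_bounds by force
lemma beta_ge: "r \<ge> r0 \<Longrightarrow> beta r \<ge> alpha r" using beta_bounds by force
lemma beta_pos: "r \<ge> r0 \<Longrightarrow> beta r > 0" using alpha_pos beta_ge by force

lemma A_mv:
  assumes y: "norm y \<ge> r0"
  shows "A y *v v = (1 / alpha (norm y)) *\<^sub>R v
     + ((1 / beta (norm y) - 1 / alpha (norm y)) / (norm y)^2 * (y \<bullet> v)) *\<^sub>R y"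
proof -
  define r where "r = norm y"
  have r: "r > 0" "r \<ge> r0" using y r0_pos by (auto simp: r_def)
  define al where "al = alpha r"
  define th where "th = theta r"
  have al: "al > 0" using alpha_pos[OF r(2)] by (simp add: al_def)
  have be: "al + th > 0" using beta_pos[OF r(2)] by (simp add: al_def th_def beta_def)
  have yy: "y \<bullet> y = r^2" by (simp add: r_def power2_norm_eq_inner)
  define M where "M = (1 / al) *\<^sub>R mat 1 + ((1 / (al + th) - 1 / al) / r^2) *\<^sub>R outer y y"
  have Mv: "M *v v = (1 / al) *\<^sub>R v + ((1 / (al + th) - 1 / al) / r^2 * (y \<bullet> v)) *\<^sub>R y" for v
    by (simp add: M_def matrix_vector_mult_add_rdistrib scaleR_matrix_vector_assoc[symmetric] outer_mv)
  have Bv: "B y *v v = al *\<^sub>R v + (th / r^2 * (y \<bullet> v)) *\<^sub>R y" for v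
    using B_mv[of y v] r by (simp add: r_def al_def th_def)
  define D where "D = (al + th) * (al * r^2)"
  have D: "D > 0" using al be r by (simp add: D_def)
  have kap: "(1 / (al + th) - 1 / al) / r^2 = - th / D"
    using al be r by (simp add: D_def field_simps)
  have k: "al * ((1 / (al + th) - 1 / al) / r^2) + th / r^2 * (1 / al) + th / r^2 * (((1 / (al + th) - 1 / al) / r^2) * r^2) = 0"
  proof -
    have t1: "al * (- th / D) = - (al * th) / D" by simp
    have t2: "th / r^2 * (1 / al) = (th * (al + th)) / D"
    proof -
      have "((al + th) * th) / ((al + th) * (al * r^2)) = th / (al * r^2)"
        by (rule mult_divide_mult_cancel_left) (use be in simp)
      then show ?thesis by (simp add: D_def mult.commute)
    qed
    have t3: "th / r^2 * ((- th / D) * r^2) = - (th * th) / D" using r by simp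
    have "al * (- th / D) + th / r^2 * (1 / al) + th / r^2 * ((- th / D) * r^2)
      = (- (al * th) + th * (al + th) - th * th) / D"
      unfolding t1 t2 t3 by (simp add: diff_divide_distrib add_divide_distrib)
    also have "\<dots> = 0" by (simp add: algebra_simps)
    finally show ?thesis by (simp only: kap)
  qed
  define ia where "ia = 1 / al"
  define kp where "kp = (1 / (al + th) - 1 / al) / r^2"
  define c where "c = th / r^2"
  have aia: "al * ia = 1" using al by (simp add: ia_def)
  have k': "al * kp + c * ia + c * (kp * r^2) = 0" using k by (simp add: ia_def kp_def c_def)
  have Mv': "M *v v = ia *\<^sub>R v + (kp * (y \<bullet> v)) *\<^sub>R y" for v by (simp add: Mv ia_def kp_def)
  have Bv': "B y *v v = al *\<^sub>R v + (c * (y \<bullet> v)) *\<^sub>R y" for v by (simp add: Bv c_def)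
  have 1: "B y *v (M *v v) = v" for v
  proof -
    have "B y *v (M *v v) = al *\<^sub>R (ia *\<^sub>R v + (kp * (y \<bullet> v)) *\<^sub>R y)
        + (c * (ia * (y \<bullet> v) + kp * (y \<bullet> v) * r^2)) *\<^sub>R y"
      by (simp add: Bv' Mv' inner_add_right yy)
    also have "\<dots> = (al * ia) *\<^sub>R v + ((al * kp + c * ia + c * (kp * r^2)) * (y \<bullet> v)) *\<^sub>R y"
      by (simp add: algebra_simps)
    also have "\<dots> = v" by (simp add: aia k')
    finally show ?thesis .
  qed
  have 2: "M *v (B y *v v) = v" for v
  proof -
    have "M *v (B y *v v) = ia *\<^sub>R (al *\<^sub>R v + (c * (y \<bullet> v)) *\<^sub>R y)
        + (kp * (al * (y \<bullet> v) + c * (y \<bullet> v) * r^2)) *\<^sub>R y"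
      by (simp add: Bv' Mv' inner_add_right yy)
    also have "\<dots> = (al * ia) *\<^sub>R v + ((al * kp + c * ia + c * (kp * r^2)) * (y \<bullet> v)) *\<^sub>R y"
      by (simp add: algebra_simps)
    also have "\<dots> = v" by (simp add: aia k')
    finally show ?thesis .
  qed
  have "A y = M" unfolding A_def by (rule matrix_inv_unique'[OF mat_from_mv[OF 1] mat_from_mv[OF 2]])
  then show ?thesis by (simp add: Mv r_def al_def th_def beta_def)
qed

lemma A_mv_y:
  assumes y: "norm y \<ge> r0"
  shows "A y *v y = (1 / beta (norm y)) *\<^sub>R y"
proof -
  have r: "norm y > 0" using y r0_pos by auto
  have "A y *v y = (1 / alpha (norm y)) *\<^sub>R y + (1 / beta (norm y) - 1 / alpha (norm y)) *\<^sub>R y"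
    using r by (simp add: A_mv[OF y] power2_norm_eq_inner[symmetric])
  also have "\<dots> = (1 / alpha (norm y) + (1 / beta (norm y) - 1 / alpha (norm y))) *\<^sub>R y"
    by (simp only: scaleR_add_left[symmetric])
  finally show ?thesis by simp
qed

end


context pms begin

lemma b_bound: "\<exists>Q\<ge>0. \<forall>y. norm y \<ge> r0 \<longrightarrow> \<bar>b y \<bullet> y\<bar> \<le> Q * norm y powr (2 - n)"
proof -
  obtain Flo Fhi DFb where F: "\<forall>s\<in>{slo..shi}. \<bar>deriv F1 s\<bar> \<le> DFb \<and> \<bar>deriv F2 s\<bar> \<le> DFb"
    using F_bounds by blast
  have DFb: "DFb \<ge> 0" using F slo_shi by force
  define Q where "Q = DFb * (g2 (sf c2 r0) * \<bar>c2\<bar> + g1 (sf c1 r0) * \<bar>c1\<bar>)"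
  have g0: "0 \<le> g1 (sf c1 r0)" "0 \<le> g2 (sf c2 r0)"
    using g1_bounds[of "sf c1 r0" "sf c1 r0"] g2_bounds[of "sf c2 r0" "sf c2 r0"] sf_nonneg[of c1 r0] sf_nonneg[of c2 r0] adm1(1) adm2(1)
    by (metis order.trans order_refl less_imp_le)+
  have Q: "Q \<ge> 0" using DFb g0
    unfolding Q_def by (auto intro!: mult_nonneg_nonneg add_nonneg_nonneg)
  have "\<bar>b y \<bullet> y\<bar> \<le> Q * norm y powr (2 - n)" if y: "norm y \<ge> r0" for y
  proof -
    define r where "r = norm y"
    have r: "r > 0" "r \<ge> r0" using y r0_pos by (auto simp: r_def)
    have S: "Shat r \<in> {slo..shi}" using Shat_range[OF r(2)] by blast
    define D1 where "D1 = deriv F1 (Shat r)"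
    define D2 where "D2 = deriv F2 (Shat r)"
    have D: "\<bar>D1\<bar> \<le> DFb" "\<bar>D2\<bar> \<le> DFb" using F S by (auto simp: D1_def D2_def)
    have nu: "norm (u1 y) = sf c1 r" "norm (u2 y) = sf c2 r"
      using sf_eq[of y] r by (simp_all add: u1_def u2_def r_def)
    have kk: "\<bar>c * r powr (- n) * r^2\<bar> = \<bar>c\<bar> * r powr (2 - n)" for c
    proof -
      have "r^2 = r powr 2" using r by (simp add: powr_numeral)
      then have kk0: "r powr (- n) * r^2 = r powr (2 - n)" by (simp add: powr_add[symmetric])
      have "\<bar>c * r powr (- n) * r^2\<bar> = \<bar>c\<bar> * \<bar>r powr (- n) * r^2\<bar>" by (simp only: mult.assoc abs_mult)
      then show ?thesis by (simp only: kk0) simp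
    qed
    have yy: "y \<bullet> y = r^2" by (simp add: r_def power2_norm_eq_inner)
    have eq0: "b y \<bullet> y = D2 * (g2 (sf c2 r) * ((c2 * r powr (- n)) * (y \<bullet> y)))
        - D1 * (g1 (sf c1 r) * ((c1 * r powr (- n)) * (y \<bullet> y)))"
      unfolding b_def Sstar_def nu unfolding u1_def u2_def
      by (simp only: inner_diff_left inner_scaleR_left D1_def D2_def r_def)
    have eq: "b y \<bullet> y = D2 * g2 (sf c2 r) * (c2 * r powr (- n) * r^2) - D1 * g1 (sf c1 r) * (c1 * r powr (- n) * r^2)"
      unfolding eq0 yy by (simp only: mult.assoc)
    have G: "0 \<le> g1 (sf c1 r)" "g1 (sf c1 r) \<le> g1 (sf c1 r0)" "0 \<le> g2 (sf c2 r)" "g2 (sf c2 r) \<le> g2 (sf c2 r0)"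
    proof -
      have h1: "a10 \<le> g1 (sf c1 r)" "g1 (sf c1 r) \<le> g1 (sf c1 r0)"
        using g1_bounds[of "sf c1 r" "sf c1 r0"] sf_nonneg[of c1 r] sf_mono[OF r(2), of c1] by blast+
      have h2: "a20 \<le> g2 (sf c2 r)" "g2 (sf c2 r) \<le> g2 (sf c2 r0)"
        using g2_bounds[of "sf c2 r" "sf c2 r0"] sf_nonneg[of c2 r] sf_mono[OF r(2), of c2] by blast+
      show "0 \<le> g1 (sf c1 r)" "g1 (sf c1 r) \<le> g1 (sf c1 r0)" "0 \<le> g2 (sf c2 r)" "g2 (sf c2 r) \<le> g2 (sf c2 r0)"
        using h1 h2 adm1(1) adm2(1) by linarith+
    qed
    have pw: "r powr (2 - n) \<ge> 0" by simp
    have abs3: "0 \<le> g \<Longrightarrow> \<bar>d * g * X\<bar> = \<bar>d\<bar> * g * \<bar>X\<bar>" for d g X :: real by (simp add: abs_mult)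
    have "\<bar>b y \<bullet> y\<bar> \<le> \<bar>D2\<bar> * g2 (sf c2 r) * (\<bar>c2\<bar> * r powr (2 - n)) + \<bar>D1\<bar> * g1 (sf c1 r) * (\<bar>c1\<bar> * r powr (2 - n))"
    proof -
      have "\<bar>b y \<bullet> y\<bar> \<le> \<bar>D2 * g2 (sf c2 r) * (c2 * r powr (- n) * r^2)\<bar> + \<bar>D1 * g1 (sf c1 r) * (c1 * r powr (- n) * r^2)\<bar>"
        unfolding eq by (rule abs_triangle_ineq4)
      also have "\<bar>D2 * g2 (sf c2 r) * (c2 * r powr (- n) * r^2)\<bar> = \<bar>D2\<bar> * g2 (sf c2 r) * (\<bar>c2\<bar> * r powr (2 - n))"
        by (simp only: abs3[OF G(3)] kk)
      also have "\<bar>D1 * g1 (sf c1 r) * (c1 * r powr (- n) * r^2)\<bar> = \<bar>D1\<bar> * g1 (sf c1 r) * (\<bar>c1\<bar> * r powr (2 - n))"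
        by (simp only: abs3[OF G(1)] kk)
      finally show ?thesis .
    qed
    also have "\<dots> \<le> DFb * g2 (sf c2 r0) * (\<bar>c2\<bar> * r powr (2 - n)) + DFb * g1 (sf c1 r0) * (\<bar>c1\<bar> * r powr (2 - n))"
      using D G DFb by (intro add_mono mult_mono mult_nonneg_nonneg) auto
    also have "\<dots> = Q * norm y powr (2 - n)" by (simp add: Q_def r_def algebra_simps)
    finally show ?thesis .
  qed
  then show ?thesis using Q by blast
qed



lemma Shat_deriv_at: assumes "r > r0" shows "\<exists>D. (Shat has_real_derivative D) (at r)"
proof -
  have "r \<in> interior {r0..}" using assms by simp
  then have eq: "at r within {r0..} = at r" by (rule at_within_interior)
  have "\<exists>D. (Shat has_real_derivative D) (at r within {r0..})" using Shat_ode assms by (meson less_imp_le)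
  then show ?thesis using eq by simp
qed

lemma Shat_cont: assumes "r \<ge> r0" shows "continuous (at r within {r0..}) Shat"
  using Shat_ode assms DERIV_continuous by blast

lemma F1_isCont: "r \<ge> r0 \<Longrightarrow> isCont F1 (Shat r)"
  using F1_deriv Shat_range DERIV_isCont by blast
lemma F2_isCont: "r \<ge> r0 \<Longrightarrow> isCont F2 (Shat r)"
  using F2_deriv Shat_range DERIV_isCont by blast

lemma gsf_deriv:
  assumes "r > 0"
  shows "\<exists>D. ((\<lambda>r. gfun a0 a al N (sf c r)) has_real_derivative D) (at r)"
  unfolding sf_def using gfun_comp_deriv[OF assms, of "\<bar>c\<bar>"] by simp

lemma FS_deriv:
  assumes "r > r0"
  shows "\<exists>D. ((\<lambda>r. F1 (Shat r)) has_real_derivative D) (at r)"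
    "\<exists>D. ((\<lambda>r. F2 (Shat r)) has_real_derivative D) (at r)"
proof -
  obtain DS where DS: "(Shat has_real_derivative DS) (at r)" using Shat_deriv_at[OF assms] by blast
  have S: "0 < Shat r" "Shat r < 1" using Shat_range[of r] assms by auto
  show "\<exists>D. ((\<lambda>r. F1 (Shat r)) has_real_derivative D) (at r)"
    using DERIV_chain2[OF F1_deriv[OF S] DS] by blast
  show "\<exists>D. ((\<lambda>r. F2 (Shat r)) has_real_derivative D) (at r)"
    using DERIV_chain2[OF F2_deriv[OF S] DS] by blast
qed

lemma alpha_beta_deriv:
  assumes "r > r0"
  shows "\<exists>D. (alpha has_real_derivative D) (at r)" "\<exists>D. (beta has_real_derivative D) (at r)"
proof -
  have r: "r > 0" using assms r0_pos by simp
  obtain A1 where A1: "((\<lambda>r. F1 (Shat r)) has_real_derivative A1) (at r)" using FS_deriv[OF assms] by blast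
  obtain A2 where A2: "((\<lambda>r. F2 (Shat r)) has_real_derivative A2) (at r)" using FS_deriv[OF assms] by blast
  obtain B1 where B1: "((\<lambda>r. g1 (sf c1 r)) has_real_derivative B1) (at r)"
    using gsf_deriv[OF r] unfolding g1_def by blast
  obtain B2 where B2: "((\<lambda>r. g2 (sf c2 r)) has_real_derivative B2) (at r)"
    using gsf_deriv[OF r] unfolding g2_def by blast
  obtain C1 where C1: "((\<lambda>r. gp1 (sf c1 r)) has_real_derivative C1) (at r)"
    using gsf_deriv[OF r] unfolding gp1_def by blast
  obtain C2 where C2: "((\<lambda>r. gp2 (sf c2 r)) has_real_derivative C2) (at r)"
    using gsf_deriv[OF r] unfolding gp2_def by blast
  have a: "\<exists>D. (alpha has_real_derivative D) (at r)"
    using DERIV_add[OF DERIV_mult[OF A1 B1] DERIV_mult[OF A2 B2]] unfolding alpha_def[abs_def] by blast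
  have t: "\<exists>D. (theta has_real_derivative D) (at r)"
    using DERIV_add[OF DERIV_mult[OF A1 C1] DERIV_mult[OF A2 C2]] unfolding theta_def[abs_def] by blast
  show "\<exists>D. (alpha has_real_derivative D) (at r)" using a by blast
  show "\<exists>D. (beta has_real_derivative D) (at r)" unfolding beta_def[abs_def] using a t DERIV_add by blast
qed

lemma beta_cont: "continuous_on {r0..} beta"
proof -
  have "continuous (at r within {r0..}) beta" if r: "r \<ge> r0" for r
  proof -
    have r': "r > 0" using r r0_pos by simp
    have c1: "continuous (at r within {r0..}) (\<lambda>r. F1 (Shat r))"
      by (rule continuous_within_compose3[OF F1_isCont[OF r] Shat_cont[OF r]])
    have c2: "continuous (at r within {r0..}) (\<lambda>r. F2 (Shat r))"
      by (rule continuous_within_compose3[OF F2_isCont[OF r] Shat_cont[OF r]])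
    have cg: "continuous (at r within {r0..}) (\<lambda>r. gfun a0 a al N (sf c r))" for a0 a al N c
    proof -
      obtain D where "((\<lambda>r. gfun a0 a al N (sf c r)) has_real_derivative D) (at r)" using gsf_deriv[OF r'] by blast
      then show ?thesis by (rule continuous_at_imp_continuous_at_within[OF DERIV_isCont])
    qed
    have cg1: "continuous (at r within {r0..}) (\<lambda>r. g1 (sf c1 r))" using cg[of a10 a1 al1 N1 c1] by (simp add: g1_def)
    have cg2: "continuous (at r within {r0..}) (\<lambda>r. g2 (sf c2 r))" using cg[of a20 a2 al2 N2 c2] by (simp add: g2_def)
    have cp1: "continuous (at r within {r0..}) (\<lambda>r. gp1 (sf c1 r))" using cg by (simp add: gp1_def)
    have cp2: "continuous (at r within {r0..}) (\<lambda>r. gp2 (sf c2 r))" using cg by (simp add: gp2_def)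
    have "continuous (at r within {r0..}) alpha" unfolding alpha_def[abs_def]
      by (intro continuous_add continuous_mult c1 c2 cg1 cg2)
    moreover have "continuous (at r within {r0..}) theta" unfolding theta_def[abs_def]
      by (intro continuous_add continuous_mult c1 c2 cp1 cp2)
    ultimately show ?thesis unfolding beta_def[abs_def] by (rule continuous_add)
  qed
  then show ?thesis by (simp add: continuous_on_eq_continuous_within)
qed

end



lemma radial_deriv:
  fixes y :: "real^'n"
  assumes "y \<noteq> 0" "(p has_real_derivative p') (at (norm y))"
  shows "((\<lambda>y. p (norm y)) has_derivative (\<lambda>h. (p' / norm y) * (y \<bullet> h))) (at y)"
proof -
  have n: "(norm has_derivative (\<lambda>h. h \<bullet> sgn y)) (at y)" using has_derivative_norm[OF assms(1)] .
  have p: "(p has_derivative (\<lambda>k. p' * k)) (at (norm y))" using assms(2) by (simp add: has_field_derivative_def)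
  have "((\<lambda>y. p (norm y)) has_derivative (\<lambda>h. p' * (h \<bullet> sgn y))) (at y)"
    using has_derivative_compose[OF n p] by (simp add: o_def)
  moreover have "(\<lambda>h. p' * (h \<bullet> sgn y)) = (\<lambda>h. (p' / norm y) * (y \<bullet> h))"
    by (rule ext) (simp add: sgn_div_norm inner_commute divide_inverse mult.commute mult.left_commute)
  ultimately show ?thesis by simp
qed

lemma radial_vec_deriv:
  fixes y :: "real^'n"
  assumes "y \<noteq> 0" "(q has_real_derivative q') (at (norm y))"
  shows "((\<lambda>y. q (norm y) *\<^sub>R y) has_derivative (\<lambda>h. ((q' / norm y) * (y \<bullet> h)) *\<^sub>R y + q (norm y) *\<^sub>R h)) (at y)"
proof -
  have "((\<lambda>y. q (norm y) *\<^sub>R y) has_derivative (\<lambda>h. q (norm y) *\<^sub>R h + ((q' / norm y) * (y \<bullet> h)) *\<^sub>R y)) (at y)"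
    by (rule has_derivative_scaleR[OF radial_deriv[OF assms] has_derivative_ident])
  then show ?thesis by (simp add: add.commute)
qed

context pms begin

definition Ig :: "(real \<Rightarrow> real) \<Rightarrow> real \<Rightarrow> real" where
  "Ig k r = integral {r0..r} (\<lambda>\<rho>. beta \<rho> * k \<rho>)"

lemma Ig_deriv:
  assumes k: "continuous_on {r0..} k" and r: "r > r0"
  shows "(Ig k has_real_derivative beta r * k r) (at r)"
proof -
  have c: "continuous_on {r0..r+1} (\<lambda>\<rho>. beta \<rho> * k \<rho>)"
    using continuous_on_subset[OF beta_cont] continuous_on_subset[OF k]
    by (intro continuous_on_mult) auto
  have "((\<lambda>x. integral {r0..x} (\<lambda>\<rho>. beta \<rho> * k \<rho>)) has_real_derivative beta r * k r) (at r within {r0..r+1})"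
    using integral_has_real_derivative[OF c] r by simp
  moreover have "at r within {r0..r+1} = at r" using r by (intro at_within_interior) simp
  ultimately show ?thesis unfolding Ig_def[abs_def] by simp
qed

lemma Ig_nonneg:
  assumes k: "continuous_on {r0..} k" "\<And>\<rho>. \<rho> \<ge> r0 \<Longrightarrow> k \<rho> \<ge> 0" and r: "r \<ge> r0"
  shows "Ig k r \<ge> 0"
proof -
  have c: "continuous_on {r0..r} (\<lambda>\<rho>. beta \<rho> * k \<rho>)"
    using continuous_on_subset[OF beta_cont] continuous_on_subset[OF k(1)]
    by (intro continuous_on_mult) auto
  show ?thesis unfolding Ig_def
    by (rule integral_nonneg[OF integrable_continuous_real[OF c]])
      (use k(2) beta_pos in \<open>simp add: less_imp_le\<close>)
qed

end


context pms begin

lemma U_eq: "U = {x. r0 < norm x}" using U_def by simp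
lemma U_open: "open U" unfolding U_eq by (rule open_Collect_less) (auto intro: continuous_intros)

lemma gw_facts:
  assumes t: "t \<in> {0<..T}"
  shows "\<And>y. norm y > r0 \<Longrightarrow> ((\<lambda>z. w z t) has_derivative (\<lambda>h. grad (\<lambda>z. w z t) y \<bullet> h)) (at y)"
    and "\<And>x. norm x > r0 \<Longrightarrow> grad (\<lambda>z. w z t) differentiable (at x)"
proof -
  have C: "\<forall>x\<in>U. (\<lambda>y. w y t) differentiable (at x) \<and> (\<forall>i. (\<lambda>y. partial i (\<lambda>z. w z t) y) differentiable (at x))"
    using w_C21 t unfolding C21_def by blast
  fix y :: "real^'n" assume "norm y > r0"
  then have "y \<in> U" by (simp add: U_eq)
  then obtain D where "((\<lambda>z. w z t) has_derivative D) (at y)" using C by (auto simp: differentiable_def)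
  then show "((\<lambda>z. w z t) has_derivative (\<lambda>h. grad (\<lambda>z. w z t) y \<bullet> h)) (at y)" by (rule grad_deriv)
next
  have C: "\<forall>x\<in>U. (\<lambda>y. w y t) differentiable (at x) \<and> (\<forall>i. (\<lambda>y. partial i (\<lambda>z. w z t) y) differentiable (at x))"
    using w_C21 t unfolding C21_def by blast
  fix x :: "real^'n" assume "norm x > r0"
  then have "x \<in> U" by (simp add: U_eq)
  have eq: "grad (\<lambda>z. w z t) = (\<lambda>y. \<Sum>i\<in>UNIV. partial i (\<lambda>z. w z t) y *\<^sub>R axis i (1::real))"
  proof (rule ext)
    fix y
    show "grad (\<lambda>z. w z t) y = (\<Sum>i\<in>UNIV. partial i (\<lambda>z. w z t) y *\<^sub>R axis i (1::real))"
      using basis_expansion[of "\<chi> i. partial i (\<lambda>z. w z t) y"]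
      by (simp add: grad_def scalar_mult_eq_scaleR)
  qed
  show "grad (\<lambda>z. w z t) differentiable (at x)" unfolding eq
    using C \<open>x \<in> U\<close> by (intro differentiable_sum differentiable_scaleR) auto
qed

lemma trace_spec:
  assumes x: "norm x \<ge> r0" and lH: "linear H" and nsd: "\<And>u. u \<bullet> H u \<le> 0"
  shows "(\<Sum>i\<in>UNIV. (1 / alpha (norm x)) * (H (axis i 1))$i
           + ((1 / beta (norm x) - 1 / alpha (norm x)) / (norm x)^2) * ((x \<bullet> H (axis i 1)) * x$i)) \<le> 0"
proof -
  define r where "r = norm x"
  have r: "r > 0" using x r0_pos unfolding r_def by linarith
  have al: "alpha r > 0" using alpha_pos x by (simp add: r_def)
  have be: "beta r > 0" using beta_pos x by (simp add: r_def)
  define u where "u = 1 / sqrt (alpha r)"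
  define v where "v = 1 / sqrt (beta r)"
  have u2: "u^2 = 1 / alpha r" using al by (simp add: u_def power_divide)
  have v2: "v^2 = 1 / beta r" using be by (simp add: v_def power_divide)
  define bq where "bq = (v - u) / r^2"
  have c: "2 * u * bq + bq^2 * r^2 = (1 / beta r - 1 / alpha r) / r^2"
  proof -
    have "2 * u * bq + bq^2 * r^2 = (v^2 - u^2) / r^2"
      using r by (simp add: bq_def field_simps power2_eq_square)
    then show ?thesis by (simp add: u2 v2)
  qed
  have "(\<Sum>i\<in>UNIV. u^2 * (H (axis i 1))$i + (2*u*bq + bq^2*(norm x)^2) * ((x \<bullet> H (axis i 1)) * x$i)) \<le> 0"
    by (rule trace_nonpos[OF lH nsd])
  then show ?thesis using c by (simp add: u2 r_def)
qed

end


context pms begin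

lemma spatial:
  fixes x :: "real^'n" and t E C \<delta> \<sigma> \<rho> :: real and hh chi :: "real \<Rightarrow> real"
  assumes x: "norm x > r0" and t: "t \<in> {0<..T}" and sig: "\<sigma> = 1 \<or> \<sigma> = -1"
    and hh: "\<And>s. s > r0 \<Longrightarrow> (hh has_real_derivative - C * beta s * exp (-s)) (at s)"
    and chi: "\<And>s. s > r0 \<Longrightarrow> (chi has_real_derivative beta s * s) (at s)"
    and rho: "\<rho> > 0" "\<And>y. y \<in> ball x \<rho> \<Longrightarrow> norm y > r0"
    and mx: "\<And>y. y \<in> ball x \<rho> \<Longrightarrow> \<sigma> * w y t - (E * hh (norm y) + \<delta> * chi (norm y))
                 \<le> \<sigma> * w x t - (E * hh (norm x) + \<delta> * chi (norm x))"
  shows "\<sigma> * f0 x t \<ge> \<sigma> * vector_derivative (\<lambda>s. w x s) (at t within {0..T})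
      - (C * E * (exp (- norm x) / norm x + exp (- norm x) / (norm x)^2) * norm x
         + n * (\<delta> - C * E * exp (- norm x) / norm x))
      - (\<delta> - C * E * exp (- norm x) / norm x) * (b x \<bullet> x)"
proof -
  define r where "r = norm x"
  have r: "r > r0" "r > 0" "x \<noteq> 0" using x r0_pos by (auto simp: r_def)
  have ss: "\<sigma> * \<sigma> = 1" using sig by auto
  define m where "m = (\<lambda>s::real. \<delta> - C * E * exp (-s) / s)"
  define md where "md = (\<lambda>s::real. C * E * (exp (-s) / s + exp (-s) / s^2))"
  have m_deriv: "(m has_real_derivative md s) (at s)" if "s > 0" for s
    unfolding m_def md_def using that
    by (auto intro!: derivative_eq_intros simp: field_simps power2_eq_square)
  define p where "p = (\<lambda>s. E * hh s + \<delta> * chi s)"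
  have p_deriv: "(p has_real_derivative beta s * s * m s) (at s)" if "s > r0" for s
  proof -
    have "(p has_real_derivative E * (- C * beta s * exp (-s)) + \<delta> * (beta s * s)) (at s)"
      unfolding p_def by (intro DERIV_add DERIV_cmult hh chi that)
    moreover have "E * (- C * beta s * exp (-s)) + \<delta> * (beta s * s) = beta s * s * m s"
      using that r0_pos by (simp add: m_def field_simps)
    ultimately show ?thesis by simp
  qed
  define gw where "gw = grad (\<lambda>z. w z t)"
  define PhiG where "PhiG = (\<lambda>y::real^'n. (beta (norm y) * m (norm y)) *\<^sub>R y)"
  define Gz where "Gz = (\<lambda>y. \<sigma> *\<^sub>R gw y - PhiG y)"
  have wd: "((\<lambda>z. w z t) has_derivative (\<lambda>h. gw y \<bullet> h)) (at y)" if "norm y > r0" for y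
    using gw_facts(1)[OF t that] by (simp add: gw_def)
  have Zd: "((\<lambda>y. \<sigma> * w y t - p (norm y)) has_derivative (\<lambda>h. Gz y \<bullet> h)) (at y)" if y: "y \<in> ball x \<rho>" for y
  proof -
    have ny: "norm y > r0" using rho(2)[OF y] .
    then have y0: "y \<noteq> 0" using r0_pos by auto
    have pd: "((\<lambda>y. p (norm y)) has_derivative (\<lambda>h. (beta (norm y) * norm y * m (norm y) / norm y) * (y \<bullet> h))) (at y)"
      by (rule radial_deriv[OF y0 p_deriv[OF ny]])
    have "((\<lambda>y. \<sigma> * w y t - p (norm y)) has_derivative
        (\<lambda>h. \<sigma> * (gw y \<bullet> h) - (beta (norm y) * norm y * m (norm y) / norm y) * (y \<bullet> h))) (at y)"
      by (intro has_derivative_diff has_derivative_mult_right wd[OF ny] pd)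
    then show ?thesis
      by (rule has_derivative_eq_rhs) (use y0 in \<open>auto simp: fun_eq_iff Gz_def PhiG_def inner_diff_left\<close>)
  qed
  have gwdiff: "gw differentiable (at x)" using gw_facts(2)[OF t x] by (simp add: gw_def)
  obtain Db where Db: "(beta has_real_derivative Db) (at r)" using alpha_beta_deriv[OF r(1)] by blast
  have q_deriv: "((\<lambda>s. beta s * m s) has_real_derivative (Db * m r + md r * beta r)) (at r)"
    by (rule DERIV_mult[OF Db m_deriv[OF r(2)]])
  have PhiGdiff: "PhiG differentiable (at x)"
    using radial_vec_deriv[OF r(3), of "\<lambda>s. beta s * m s"] q_deriv
    unfolding PhiG_def r_def differentiable_def by blast
  have Gzdiff: "Gz differentiable (at x)" unfolding Gz_def
    by (intro differentiable_diff differentiable_scaleR differentiable_const gwdiff PhiGdiff)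
  obtain H where H: "(Gz has_derivative H) (at x)" using Gzdiff by (auto simp: differentiable_def)
  have lH: "linear H" using H has_derivative_linear by blast
  have mx': "(\<lambda>y. \<sigma> * w y t - p (norm y)) y \<le> (\<lambda>y. \<sigma> * w y t - p (norm y)) x" if "y \<in> ball x \<rho>" for y
    using mx[OF that] by (simp add: p_def)
  have G0: "Gz x = 0" by (rule second_order(1)[OF rho(1) Zd H mx'])
  have nsd: "u \<bullet> H u \<le> 0" for u by (rule second_order(2)[OF rho(1) Zd H mx'])
  define ia where "ia = (\<lambda>s. 1 / alpha s)"
  define kp where "kp = (\<lambda>s. (1 / beta s - 1 / alpha s) / s^2)"
  define V where "V = (\<lambda>y. m (norm y) *\<^sub>R y + ia (norm y) *\<^sub>R Gz y + (kp (norm y) * (y \<bullet> Gz y)) *\<^sub>R y)"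
  have AV: "A y *v gw y = \<sigma> *\<^sub>R V y" if ny: "norm y > r0" for y
  proof -
    have ny': "norm y \<ge> r0" using ny by simp
    have g: "gw y = \<sigma> *\<^sub>R (PhiG y + Gz y)" using sig by (auto simp: Gz_def)
    have APhi: "A y *v PhiG y = m (norm y) *\<^sub>R y"
      using A_mv_y[OF ny'] beta_pos[OF ny'] by (simp add: PhiG_def matrix_vector_mult_scaleR)
    have AG: "A y *v Gz y = ia (norm y) *\<^sub>R Gz y + (kp (norm y) * (y \<bullet> Gz y)) *\<^sub>R y"
      by (simp add: A_mv[OF ny'] ia_def kp_def)
    show ?thesis by (simp add: g matrix_vector_right_distrib matrix_vector_mult_scaleR APhi AG V_def)
  qed
  obtain Da where Da: "(alpha has_real_derivative Da) (at r)" using alpha_beta_deriv[OF r(1)] by blast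
  have al: "alpha r > 0" "beta r > 0" using alpha_pos beta_pos r by auto
  obtain dia where dia: "(ia has_real_derivative dia) (at r)"
    using DERIV_divide[OF DERIV_const Da, of 1] al unfolding ia_def by force
  obtain dkp where dkp: "(kp has_real_derivative dkp) (at r)"
  proof -
    have "((\<lambda>s. 1 / beta s) has_real_derivative (0 * beta r - 1 * Db) / (beta r * beta r)) (at r)"
      using DERIV_divide[OF DERIV_const Db, of 1] al by simp
    moreover have "((\<lambda>s. 1 / alpha s) has_real_derivative (0 * alpha r - 1 * Da) / (alpha r * alpha r)) (at r)"
      using DERIV_divide[OF DERIV_const Da, of 1] al by simp
    ultimately have "((\<lambda>s. 1 / beta s - 1 / alpha s) has_real_derivative
        (0 * beta r - 1 * Db) / (beta r * beta r) - (0 * alpha r - 1 * Da) / (alpha r * alpha r)) (at r)"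
      by (rule DERIV_diff)
    from DERIV_divide[OF this DERIV_pow[of 2]] r have "\<exists>d. (kp has_real_derivative d) (at r)"
      unfolding kp_def by auto
    then show ?thesis using that by blast
  qed
  have dm: "((\<lambda>y. m (norm y) *\<^sub>R y) has_derivative (\<lambda>h. ((md r / r) * (x \<bullet> h)) *\<^sub>R x + m r *\<^sub>R h)) (at x)"
    using radial_vec_deriv[OF r(3) m_deriv[OF r(2), unfolded r_def]] by (simp add: r_def)
  have diad: "((\<lambda>y. ia (norm y)) has_derivative (\<lambda>h. (dia / r) * (x \<bullet> h))) (at x)"
    using radial_deriv[OF r(3), of ia dia] dia by (simp add: r_def)
  have dkpd: "((\<lambda>y. kp (norm y)) has_derivative (\<lambda>h. (dkp / r) * (x \<bullet> h))) (at x)"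
    using radial_deriv[OF r(3), of kp dkp] dkp by (simp add: r_def)
  define DV where "DV = (\<lambda>h. ((md r / r) * (x \<bullet> h)) *\<^sub>R x + m r *\<^sub>R h + ia r *\<^sub>R H h + (kp r * (x \<bullet> H h)) *\<^sub>R x)"
  have Vd: "(V has_derivative DV) (at x)"
  proof -
    have t2: "((\<lambda>y. ia (norm y) *\<^sub>R Gz y) has_derivative (\<lambda>h. ia (norm x) *\<^sub>R H h + ((dia / r) * (x \<bullet> h)) *\<^sub>R Gz x)) (at x)"
      by (rule has_derivative_scaleR[OF diad H])
    have ip: "((\<lambda>y. y \<bullet> Gz y) has_derivative (\<lambda>h. x \<bullet> H h + h \<bullet> Gz x)) (at x)"
      by (rule has_derivative_inner[OF has_derivative_ident H])
    have t3a: "((\<lambda>y. kp (norm y) * (y \<bullet> Gz y)) has_derivative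
        (\<lambda>h. kp (norm x) * (x \<bullet> H h + h \<bullet> Gz x) + (dkp / r) * (x \<bullet> h) * (x \<bullet> Gz x))) (at x)"
      by (rule has_derivative_mult[OF dkpd ip])
    have t3: "((\<lambda>y. (kp (norm y) * (y \<bullet> Gz y)) *\<^sub>R y) has_derivative
        (\<lambda>h. (kp (norm x) * (x \<bullet> Gz x)) *\<^sub>R h + (kp (norm x) * (x \<bullet> H h + h \<bullet> Gz x) + (dkp / r) * (x \<bullet> h) * (x \<bullet> Gz x)) *\<^sub>R x)) (at x)"
      by (rule has_derivative_scaleR[OF t3a has_derivative_ident])
    have "(V has_derivative (\<lambda>h. (((md r / r) * (x \<bullet> h)) *\<^sub>R x + m r *\<^sub>R h)
        + (ia (norm x) *\<^sub>R H h + ((dia / r) * (x \<bullet> h)) *\<^sub>R Gz x)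
        + ((kp (norm x) * (x \<bullet> Gz x)) *\<^sub>R h + (kp (norm x) * (x \<bullet> H h + h \<bullet> Gz x) + (dkp / r) * (x \<bullet> h) * (x \<bullet> Gz x)) *\<^sub>R x))) (at x)"
      unfolding V_def by (intro has_derivative_add dm t2 t3)
    then show ?thesis by (rule has_derivative_eq_rhs) (simp add: fun_eq_iff DV_def G0 r_def)
  qed
  have part: "partial i (\<lambda>y. (A y *v gw y) $ i) x = \<sigma> * (DV (axis i 1)) $ i" for i
  proof -
    have "((\<lambda>y. (\<sigma> *\<^sub>R V y) $ i) has_derivative (\<lambda>h. (\<sigma> *\<^sub>R DV h) $ i)) (at x)"
      by (rule bounded_linear.has_derivative[OF bounded_linear_vec_nth has_derivative_scaleR_right[OF Vd]])
    then have "((\<lambda>y. (A y *v gw y) $ i) has_derivative (\<lambda>h. (\<sigma> *\<^sub>R DV h) $ i)) (at x)"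
      by (rule has_derivative_transform_within_open[OF _ U_open]) (use x AV in \<open>auto simp: U_eq\<close>)
    then show ?thesis by (simp add: partial_eq)
  qed
  define tr where "tr = (\<Sum>i\<in>UNIV. ia r * (H (axis i 1))$i + kp r * ((x \<bullet> H (axis i 1)) * x$i))"
  have trn: "tr \<le> 0" unfolding tr_def ia_def kp_def using trace_spec[of x H] x lH nsd by (simp add: r_def)
  have sumDV: "(\<Sum>i\<in>UNIV. (DV (axis i 1)) $ i) = md r * r + n * m r + tr"
  proof -
    have e: "(DV (axis i 1)) $ i = (md r / r) * (x$i * x$i) + m r + (ia r * (H (axis i 1))$i + kp r * ((x \<bullet> H (axis i 1)) * x$i))" for i
      by (simp add: DV_def inner_axis algebra_simps)
    have s3: "(\<Sum>i\<in>UNIV. x$i * x$i) = r^2"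
      by (simp add: r_def power2_norm_eq_inner inner_vec_def)
    have "(\<Sum>i\<in>UNIV. (DV (axis i 1)) $ i) = (md r / r) * (\<Sum>i\<in>UNIV. x$i * x$i) + real CARD('n) * m r + tr"
      by (simp add: e sum.distrib sum_distrib_left tr_def)
    also have "\<dots> = md r * r + n * m r + tr" using r by (simp add: s3 n_def power2_eq_square)
    finally show ?thesis .
  qed
  have bterm: "b x \<bullet> (A x *v gw x) = \<sigma> * (m r * (b x \<bullet> x))"
    using AV[OF x] G0 by (simp add: V_def r_def)
  have xU: "x \<in> U" using x by (simp add: U_eq)
  have L: "vector_derivative (\<lambda>s. w x s) (at t within {0..T}) - (\<Sum>i\<in>UNIV. partial i (\<lambda>y. (A y *v gw y) $ i) x)
      - b x \<bullet> (A x *v gw x) = f0 x t"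
    using w_eq xU t unfolding Lop_def gw_def by blast
  have "\<sigma> * f0 x t = \<sigma> * vector_derivative (\<lambda>s. w x s) (at t within {0..T}) - (\<sigma> * \<sigma>) * (md r * r + n * m r + tr)
      - (\<sigma> * \<sigma>) * (m r * (b x \<bullet> x))"
    unfolding L[symmetric] by (simp add: part sum_distrib_left[symmetric] sumDV bterm algebra_simps)
  also have "\<dots> = \<sigma> * vector_derivative (\<lambda>s. w x s) (at t within {0..T}) - (md r * r + n * m r + tr)
      - m r * (b x \<bullet> x)" by (simp add: ss)
  finally show ?thesis using trn by (simp add: m_def md_def r_def)
qed

end


context pms begin

lemma closure_U: "closure U = {x. r0 \<le> norm x}"
proof -
  have "U = - cball 0 r0" by (auto simp: U_eq)
  then have "closure U = - ball 0 r0" by (simp add: closure_complement interior_cball)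
  then show ?thesis by auto
qed

lemma exp_cont: "continuous_on {r0..} (\<lambda>s. exp (- s))" by (intro continuous_intros)
lemma id_cont: "continuous_on {r0..} (\<lambda>s::real. s)" by (intro continuous_intros)

lemma hh_facts:
  fixes C R2 bhi blo :: real
  assumes bb: "blo > 0" "\<And>r. r \<ge> r0 \<Longrightarrow> blo \<le> beta r \<and> beta r \<le> bhi" and C: "C \<ge> 0"
  defines "hh \<equiv> (\<lambda>s. C * (Ig (\<lambda>s. exp (- s)) R2 - Ig (\<lambda>s. exp (- s)) s + bhi * exp (- R2)))"
  shows "\<And>s. s > r0 \<Longrightarrow> (hh has_real_derivative - C * beta s * exp (- s)) (at s)"
    and "\<And>s. r0 < s \<Longrightarrow> s \<le> R2 \<Longrightarrow> C * blo * exp (- s) \<le> hh s"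
    and "\<And>s. r0 < s \<Longrightarrow> s \<le> R2 \<Longrightarrow> hh s \<le> 2 * C * bhi * exp (- s)"
proof -
  have d: "(hh has_real_derivative - C * beta s * exp (- s)) (at s)" if "s > r0" for s
  proof -
    have "(hh has_real_derivative C * (0 - beta s * exp (- s) + 0)) (at s)"
      unfolding hh_def by (intro DERIV_cmult DERIV_add DERIV_diff DERIV_const Ig_deriv[OF exp_cont that])
    then show ?thesis by (simp add: mult.assoc)
  qed
  then show "\<And>s. s > r0 \<Longrightarrow> (hh has_real_derivative - C * beta s * exp (- s)) (at s)" .
  fix s assume s: "r0 < s" "s \<le> R2"
  have "(\<lambda>s. hh s - C * blo * exp (- s)) R2 \<le> (\<lambda>s. hh s - C * blo * exp (- s)) s"
  proof (rule deriv_nonpos_imp_antimono[OF _ _ s(2)])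
    fix u assume u: "u \<in> {s..R2}"
    then have u0: "u > r0" using s by auto
    show "((\<lambda>s. hh s - C * blo * exp (- s)) has_real_derivative - C * beta u * exp (- u) + C * blo * exp (- u)) (at u)"
    proof -
      have e: "((\<lambda>s. C * blo * exp (- s)) has_real_derivative - (C * blo * exp (- u))) (at u)"
        by (auto intro!: derivative_eq_intros)
      from DERIV_diff[OF d[OF u0] e] show ?thesis by simp
    qed
    show "- C * beta u * exp (- u) + C * blo * exp (- u) \<le> 0"
      using bb(2)[of u] u0 C by (auto intro!: mult_right_mono mult_left_mono simp: algebra_simps)
  qed
  moreover have "C * (blo * exp (- R2)) \<le> C * (bhi * exp (- R2))"
    using bb(2)[of r0] C by (intro mult_left_mono mult_right_mono) auto
  ultimately show "C * blo * exp (- s) \<le> hh s"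
    by (simp add: hh_def algebra_simps)
next
  fix s assume s: "r0 < s" "s \<le> R2"
  have d: "(hh has_real_derivative - C * beta s * exp (- s)) (at s)" if "s > r0" for s
  proof -
    have "(hh has_real_derivative C * (0 - beta s * exp (- s) + 0)) (at s)"
      unfolding hh_def by (intro DERIV_cmult DERIV_add DERIV_diff DERIV_const Ig_deriv[OF exp_cont that])
    then show ?thesis by (simp add: mult.assoc)
  qed
  have "(\<lambda>s. 2 * C * bhi * exp (- s) - hh s) R2 \<le> (\<lambda>s. 2 * C * bhi * exp (- s) - hh s) s"
  proof (rule deriv_nonpos_imp_antimono[OF _ _ s(2)])
    fix u assume u: "u \<in> {s..R2}"
    then have u0: "u > r0" using s by auto
    show "((\<lambda>s. 2 * C * bhi * exp (- s) - hh s) has_real_derivative - 2 * C * bhi * exp (- u) + C * beta u * exp (- u)) (at u)"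
    proof -
      have e: "((\<lambda>s. 2 * C * bhi * exp (- s)) has_real_derivative - (2 * C * bhi * exp (- u))) (at u)"
        by (auto intro!: derivative_eq_intros)
      from DERIV_diff[OF e d[OF u0]] show ?thesis by simp
    qed
    show "- 2 * C * bhi * exp (- u) + C * beta u * exp (- u) \<le> 0"
    proof -
      have "beta u \<le> bhi" "0 < beta u" using bb(2)[of u] bb(1) u0 by auto
      then have "C * beta u * exp (- u) \<le> C * bhi * exp (- u)" using C by (intro mult_right_mono mult_left_mono) auto
      moreover have "0 \<le> C * bhi * exp (- u)" using C \<open>beta u \<le> bhi\<close> \<open>0 < beta u\<close> by simp
      ultimately show ?thesis by simp
    qed
  qed
  moreover have "0 \<le> C * bhi * exp (- R2)" using C bb(1) bb(2)[of r0] by simp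
  ultimately show "hh s \<le> 2 * C * bhi * exp (- s)" by (simp add: hh_def algebra_simps)
qed


lemma chi_facts:
  assumes bb: "blo > 0" "\<And>r. r \<ge> r0 \<Longrightarrow> blo \<le> beta r \<and> beta r \<le> bhi"
  shows "\<And>s. s > r0 \<Longrightarrow> (Ig (\<lambda>s. s) has_real_derivative beta s * s) (at s)"
    and "\<And>s. s \<ge> r0 \<Longrightarrow> Ig (\<lambda>s. s) s \<ge> 0"
    and "\<And>R1 R2. r0 < R1 \<Longrightarrow> R1 \<le> R2 \<Longrightarrow> Ig (\<lambda>s. s) R2 \<ge> blo * r0 * (R2 - R1)"
proof -
  show d: "\<And>s. s > r0 \<Longrightarrow> (Ig (\<lambda>s. s) has_real_derivative beta s * s) (at s)"
    by (rule Ig_deriv[OF id_cont])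
  show nn: "\<And>s. s \<ge> r0 \<Longrightarrow> Ig (\<lambda>s. s) s \<ge> 0"
    by (rule Ig_nonneg[OF id_cont]) (use r0_pos in auto)
  fix R1 R2 :: real assume R: "r0 < R1" "R1 \<le> R2"
  have "(\<lambda>s. Ig (\<lambda>s. s) s - blo * r0 * s) R1 \<le> (\<lambda>s. Ig (\<lambda>s. s) s - blo * r0 * s) R2"
  proof (rule deriv_nonneg_imp_mono[OF _ _ R(2)])
    fix u assume u: "u \<in> {R1..R2}"
    then have u0: "u > r0" using R by auto
    show "((\<lambda>s. Ig (\<lambda>s. s) s - blo * r0 * s) has_real_derivative beta u * u - blo * r0) (at u)"
      using DERIV_diff[OF d[OF u0] DERIV_cmult[OF DERIV_ident, of "blo * r0"]] by simp
    have "blo * r0 \<le> beta u * u" using bb(2)[of u] u0 bb(1) r0_pos by (intro mult_mono) auto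
    then show "0 \<le> beta u * u - blo * r0" by simp
  qed
  then have "Ig (\<lambda>s. s) R2 \<ge> Ig (\<lambda>s. s) R1 + blo * r0 * (R2 - R1)" by (simp add: algebra_simps)
  moreover have "Ig (\<lambda>s. s) R1 \<ge> 0" using nn R by simp
  ultimately show "Ig (\<lambda>s. s) R2 \<ge> blo * r0 * (R2 - R1)" by simp
qed

end


context pms begin

lemma maxprin:
  fixes \<epsilon> M R1 blo bhi Q \<sigma> \<delta> t0 :: real and x0 :: "real^'n"
  assumes eps: "\<epsilon> > 0" and R1: "R1 > r0" and M: "M > 0"
    and Mb: "\<And>x t. norm x \<ge> r0 \<Longrightarrow> t \<in> {0..T} \<Longrightarrow> \<bar>w x t\<bar> \<le> M"
    and w0b: "\<And>x. norm x \<ge> R1 \<Longrightarrow> \<bar>w0 x\<bar> \<le> \<epsilon>"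
    and f0b: "\<And>x t. norm x \<ge> R1 \<Longrightarrow> t \<in> {0..T} \<Longrightarrow> \<bar>f0 x t\<bar> \<le> \<epsilon>"
    and bb: "blo > 0" "\<And>r. r \<ge> r0 \<Longrightarrow> blo \<le> beta r \<and> beta r \<le> bhi"
    and Qb: "Q \<ge> 0" "\<And>y. norm y \<ge> r0 \<Longrightarrow> \<bar>b y \<bullet> y\<bar> \<le> Q * norm y powr (2 - n)"
    and sig: "\<sigma> = 1 \<or> \<sigma> = -1"
    and x0: "norm x0 \<ge> R1" and t0: "t0 \<in> {0..T}" and del: "\<delta> > 0"
  shows "\<sigma> * w x0 t0 \<le> 2 * \<epsilon> * (1 + T)
           + exp ((1 + Q * r0 powr (1 - n)) / blo * T) * (2 * (M * exp R1 / blo) * bhi * exp (- norm x0))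
           + \<delta> * (Ig (\<lambda>s. s) (norm x0) + (n + Q * r0 powr (2 - n) + 1) * T)"
proof -
  define C where "C = M * exp R1 / blo"
  define Cb1 where "Cb1 = Q * r0 powr (2 - n)"
  define Cb2 where "Cb2 = Q * r0 powr (1 - n)"
  define lam where "lam = (1 + Cb2) / blo"
  define K where "K = n + Cb1 + 1"
  have C0: "C > 0" using M bb(1) by (simp add: C_def)
  have Cb0: "Cb1 \<ge> 0" "Cb2 \<ge> 0" using Qb(1) by (simp_all add: Cb1_def Cb2_def)
  have lam0: "lam > 0" using Cb0 bb(1) by (simp add: lam_def)
  have lamblo: "lam * blo = 1 + Cb2" using bb(1) by (simp add: lam_def)
  have n2: "n \<ge> 2" using dim n_def by simp
  have K0: "K \<ge> 0" using Cb0 n2 by (simp add: K_def)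
  have Cblo: "C * blo * exp (- R1) = M" using bb(1) by (simp add: C_def exp_minus field_simps)
  define R2 where "R2 = max (norm x0 + 1) (R1 + 2 * M / (\<delta> * blo * r0) + 1)"
  have q: "2 * M / (\<delta> * blo * r0) > 0" using M del bb(1) r0_pos by simp
  have R2: "R2 > R1" "R2 > norm x0" using q x0 by (auto simp: R2_def max_def)
  have R2b: "\<delta> * (blo * r0 * (R2 - R1)) > 2 * M"
  proof -
    define D where "D = \<delta> * blo * r0"
    have pos: "D > 0" using del bb(1) r0_pos by (simp add: D_def)
    have "R2 - R1 \<ge> 2 * M / D + 1" by (simp add: R2_def D_def)
    then have "D * (R2 - R1) \<ge> D * (2 * M / D + 1)" using pos by (intro mult_left_mono) auto
    also have "D * (2 * M / D + 1) = 2 * M + D" using pos by (simp add: distrib_left)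
    finally have "D * (R2 - R1) > 2 * M" using pos by simp
    then show ?thesis by (simp add: D_def algebra_simps)
  qed
  define chi where "chi = Ig (\<lambda>s. s)"
  define hh where "hh = (\<lambda>s. C * (Ig (\<lambda>s. exp (- s)) R2 - Ig (\<lambda>s. exp (- s)) s + bhi * exp (- R2)))"
  have hd: "\<And>s. s > r0 \<Longrightarrow> (hh has_real_derivative - C * beta s * exp (- s)) (at s)"
    using hh_facts(1)[OF bb less_imp_le[OF C0], of _ R2] by (simp add: hh_def)
  have hlo: "\<And>s. r0 < s \<Longrightarrow> s \<le> R2 \<Longrightarrow> C * blo * exp (- s) \<le> hh s"
    using hh_facts(2)[OF bb less_imp_le[OF C0], of _ R2] by (simp add: hh_def)
  have hhi: "\<And>s. r0 < s \<Longrightarrow> s \<le> R2 \<Longrightarrow> hh s \<le> 2 * C * bhi * exp (- s)"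
    using hh_facts(3)[OF bb less_imp_le[OF C0], of _ R2] by (simp add: hh_def)
  have h0: "\<And>s. r0 < s \<Longrightarrow> s \<le> R2 \<Longrightarrow> 0 \<le> hh s"
    using hlo C0 bb(1) by (meson exp_ge_zero mult_nonneg_nonneg less_imp_le order.trans)
  have cd: "\<And>s. s > r0 \<Longrightarrow> (chi has_real_derivative beta s * s) (at s)"
    using chi_facts(1)[OF bb] by (simp add: chi_def)
  have c0: "\<And>s. s \<ge> r0 \<Longrightarrow> chi s \<ge> 0" using chi_facts(2)[OF bb] by (simp add: chi_def)
  have cR2: "chi R2 \<ge> blo * r0 * (R2 - R1)" using chi_facts(3)[OF bb R1] R2 by (simp add: chi_def)
  define Phi where "Phi = (\<lambda>(y::real^'n) t. 2 * \<epsilon> * (1 + t) + exp (lam * t) * hh (norm y) + \<delta> * (chi (norm y) + K * t))"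
  have claim: "\<sigma> * w x0 t0 \<le> Phi x0 t0"
  proof (rule ccontr)
    assume nc: "\<not> \<sigma> * w x0 t0 \<le> Phi x0 t0"
    define Ks where "Ks = {y::real^'n. R1 \<le> norm y \<and> norm y \<le> R2} \<times> {0..T}"
    define z where "z = (\<lambda>p::((real^'n) \<times> real). \<sigma> * w (fst p) (snd p) - Phi (fst p) (snd p))"
    have cK: "compact Ks"
    proof -
      have "{y::real^'n. R1 \<le> norm y \<and> norm y \<le> R2} = cball 0 R2 \<inter> - ball 0 R1" by auto
      then have "compact {y::real^'n. R1 \<le> norm y \<and> norm y \<le> R2}"
        by (simp add: compact_Int_closed open_ball closed_Compl)
      then show ?thesis unfolding Ks_def by (intro compact_Times compact_Icc)
    qed
    have neK: "(x0, t0) \<in> Ks" using x0 R2 t0 by (simp add: Ks_def)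
    have KU: "Ks \<subseteq> closure U \<times> {0..T}" using R1 by (auto simp: Ks_def closure_U)
    have Kr0: "\<And>p. p \<in> Ks \<Longrightarrow> norm (fst p) \<in> {r0<..}" using R1 by (auto simp: Ks_def)
    have hc: "continuous_on {r0<..} hh"
      by (intro continuous_at_imp_continuous_on ballI DERIV_isCont) (use hd in auto)
    have chc: "continuous_on {r0<..} chi"
      by (intro continuous_at_imp_continuous_on ballI DERIV_isCont) (use cd in auto)
    have wc: "continuous_on Ks (\<lambda>p. w (fst p) (snd p))"
      using continuous_on_subset[OF w_cont KU] by (simp add: case_prod_beta')
    have hc': "continuous_on Ks (\<lambda>p. hh (norm (fst p)))"
      by (rule continuous_on_compose2[OF hc _ ]) (auto intro!: continuous_intros dest: Kr0)
    have chc': "continuous_on Ks (\<lambda>p. chi (norm (fst p)))"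
      by (rule continuous_on_compose2[OF chc _ ]) (auto intro!: continuous_intros dest: Kr0)
    have contz: "continuous_on Ks z" unfolding z_def Phi_def
      by (intro continuous_intros wc hc' chc')
    obtain p where p: "p \<in> Ks" "\<And>q. q \<in> Ks \<Longrightarrow> z q \<le> z p"
      using continuous_attains_sup[OF cK _ contz] neK by blast
    obtain x t where xt: "p = (x, t)" by (cases p)
    have zp: "z (x, t) > 0" using p(2)[OF neK] nc xt by (simp add: z_def)
    have xK: "R1 \<le> norm x" "norm x \<le> R2" "0 \<le> t" "t \<le> T" using p(1) xt by (auto simp: Ks_def)
    have xr0: "norm x > r0" using xK R1 by simp
    have wM: "\<sigma> * w x t \<le> M" using Mb[of x t] xK xr0 sig by auto
    have hx0: "0 \<le> hh (norm x)" using h0 xr0 xK by simp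
    have chx0: "0 \<le> chi (norm x)" using c0 xr0 by simp
    have E1: "exp (lam * t) \<ge> 1" using lam0 xK by simp
    have Kt: "0 \<le> K * t" using K0 xK by simp
    have t_ne: "t \<noteq> 0"
    proof
      assume t0': "t = 0"
      have "x \<in> U" using xr0 by (simp add: U_eq)
      then have "w x t = w0 x" using w_init t0' by simp
      then have "\<sigma> * w x t \<le> \<epsilon>" using w0b[of x] xK sig by auto
      moreover have "Phi x t \<ge> 2 * \<epsilon>" using t0' hx0 chx0 del by (simp add: Phi_def)
      ultimately show False using zp eps by (simp add: z_def)
    qed
    have x_ne1: "norm x \<noteq> R1"
    proof
      assume e: "norm x = R1"
      have "M \<le> hh (norm x)" using hlo[of "norm x"] xr0 xK e Cblo by simp
      also have "\<dots> \<le> exp (lam * t) * hh (norm x)" using E1 hx0 by (simp add: mult_le_cancel_right1)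
      finally have hm: "M \<le> exp (lam * t) * hh (norm x)" .
      have "0 \<le> \<delta> * (chi (norm x) + K * t)" using chx0 Kt del by simp
      then have "Phi x t \<ge> 2 * \<epsilon> * (1 + t) + M" using hm by (simp add: Phi_def)
      moreover have "2 * \<epsilon> * (1 + t) > 0" using eps xK by simp
      ultimately show False using zp wM by (simp add: z_def)
    qed
    have x_ne2: "norm x \<noteq> R2"
    proof
      assume e: "norm x = R2"
      have "\<delta> * (chi (norm x) + K * t) \<ge> \<delta> * (blo * r0 * (R2 - R1))"
        using cR2 e Kt del by (intro mult_left_mono) auto
      then have "\<delta> * (chi (norm x) + K * t) > 2 * M" using R2b by simp
      moreover have "exp (lam * t) * hh (norm x) \<ge> 0" using hx0 by simp
      moreover have "2 * \<epsilon> * (1 + t) > 0" using eps xK by simp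
      ultimately have "Phi x t > 2 * M" by (simp add: Phi_def)
      then show False using zp wM M by (simp add: z_def)
    qed
    have xin: "R1 < norm x" "norm x < R2" "0 < t" using xK x_ne1 x_ne2 t_ne by auto
    have tt: "t \<in> {0<..T}" using xin xK by simp
    have xU: "x \<in> U" using xr0 by (simp add: U_eq)
    define \<rho> where "\<rho> = min (norm x - R1) (R2 - norm x)"
    have \<rho>0: "\<rho> > 0" using xin by (simp add: \<rho>_def)
    have ballK: "R1 < norm y \<and> norm y < R2" if y: "y \<in> ball x \<rho>" for y
    proof -
      have "\<bar>norm y - norm x\<bar> \<le> norm (y - x)" by (rule norm_triangle_ineq3)
      also have "\<dots> = dist x y" by (simp add: dist_norm norm_minus_commute)
      also have "\<dots> < \<rho>" using y by simp
      finally show ?thesis unfolding \<rho>_def by auto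
    qed
    define E where "E = exp (lam * t)"
    have mx: "\<sigma> * w y t - (E * hh (norm y) + \<delta> * chi (norm y)) \<le> \<sigma> * w x t - (E * hh (norm x) + \<delta> * chi (norm x))"
      if y: "y \<in> ball x \<rho>" for y
    proof -
      have "(y, t) \<in> Ks" using ballK[OF y] xK by (simp add: Ks_def)
      then have "z (y, t) \<le> z (x, t)" using p(2) xt by blast
      then show ?thesis by (simp add: z_def Phi_def E_def algebra_simps)
    qed
    have sp: "\<sigma> * f0 x t \<ge> \<sigma> * vector_derivative (\<lambda>s. w x s) (at t within {0..T})
      - (C * E * (exp (- norm x) / norm x + exp (- norm x) / (norm x)^2) * norm x
         + n * (\<delta> - C * E * exp (- norm x) / norm x))
      - (\<delta> - C * E * exp (- norm x) / norm x) * (b x \<bullet> x)"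
      by (rule spatial[OF xr0 tt sig hd cd \<rho>0 _ mx]) (use ballK R1 in force)+
    define \<tau> where "\<tau> = vector_derivative (\<lambda>s. w x s) (at t within {0..T})"
    define r where "r = norm x"
    have r: "r > 0" "r \<ge> r0" using xr0 r0_pos by (auto simp: r_def)
    have wt: "((\<lambda>s. w x s) has_real_derivative \<tau>) (at t within {0..T})"
    proof -
      have "(\<lambda>s. w x s) differentiable (at t within {0..T})" using w_C21 tt xU unfolding C21_def by blast
      then show ?thesis unfolding \<tau>_def by (simp add: vector_derivative_works has_real_derivative_iff_has_vector_derivative)
    qed
    have Pt: "((\<lambda>s. Phi x s) has_real_derivative (2 * \<epsilon> + lam * E * hh r + \<delta> * K)) (at t within {0..T})"
      unfolding Phi_def by (auto intro!: derivative_eq_intros simp: E_def r_def algebra_simps)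
    have gd: "((\<lambda>s. \<sigma> * w x s - Phi x s) has_real_derivative \<sigma> * \<tau> - (2 * \<epsilon> + lam * E * hh r + \<delta> * K)) (at t within {0..T})"
      by (rule DERIV_diff[OF DERIV_cmult[OF wt] Pt])
    have tsgn: "\<sigma> * \<tau> - (2 * \<epsilon> + lam * E * hh r + \<delta> * K) \<ge> 0"
    proof (rule time_sign[OF gd xin(3) xK(4)])
      show "\<forall>s\<in>{0..t}. \<sigma> * w x s - Phi x s \<le> \<sigma> * w x t - Phi x t"
      proof
        fix s assume "s \<in> {0..t}"
        then have "(x, s) \<in> Ks" using xK by (simp add: Ks_def)
        then have "z (x, s) \<le> z (x, t)" using p(2) xt by blast
        then show "\<sigma> * w x s - Phi x s \<le> \<sigma> * w x t - Phi x t" by (simp add: z_def)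
      qed
    qed
    have bx: "\<bar>b x \<bullet> x\<bar> \<le> Q * r powr (2 - n)" using Qb(2)[of x] r by (simp add: r_def)
    have pw1: "r powr (2 - n) \<le> r0 powr (2 - n)" using r r0_pos n2 by (intro powr_mono2') auto
    have pw2: "r powr (1 - n) \<le> r0 powr (1 - n)" using r r0_pos n2 by (intro powr_mono2') auto
    have pw3: "r powr (2 - n) = r powr (1 - n) * r"
    proof -
      have "r powr (1 - n) * r = r powr (1 - n) * r powr 1" using r by simp
      also have "\<dots> = r powr ((1 - n) + 1)" by (rule powr_add[symmetric])
      also have "(1 - n) + 1 = 2 - n" by simp
      finally show ?thesis by simp
    qed
    have bx1: "\<bar>b x \<bullet> x\<bar> \<le> Cb1" unfolding Cb1_def using bx pw1 Qb(1) by (meson mult_left_mono order.trans)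
    have bx2: "\<bar>b x \<bullet> x\<bar> \<le> Cb2 * r"
    proof -
      have "Q * r powr (2 - n) = Q * r powr (1 - n) * r" by (simp add: pw3)
      also have "\<dots> \<le> Q * r0 powr (1 - n) * r" using pw2 Qb(1) r by (intro mult_right_mono mult_left_mono) auto
      finally show ?thesis using bx by (simp add: Cb2_def)
    qed
    have E0: "E > 0" by (simp add: E_def)
    have P0: "C * E * exp (- r) \<ge> 0" using C0 E0 by simp
    have k1: "C * E * (exp (- r) / r + exp (- r) / r^2) * r = C * E * exp (- r) + C * E * exp (- r) / r"
      using r by (simp add: field_simps power2_eq_square)
    have k2: "n * (\<delta> - C * E * exp (- r) / r) = n * \<delta> - n * (C * E * exp (- r) / r)"
      by (simp add: algebra_simps)
    have k3: "(\<delta> - C * E * exp (- r) / r) * (b x \<bullet> x) \<le> \<delta> * Cb1 + C * E * exp (- r) * Cb2"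
    proof -
      have q0: "C * E * exp (- r) / r \<ge> 0" using P0 r by simp
      have "\<delta> * (b x \<bullet> x) \<le> \<delta> * Cb1" using bx1 del by (intro mult_left_mono) auto
      moreover have "- (C * E * exp (- r) / r * (b x \<bullet> x)) \<le> C * E * exp (- r) / r * (Cb2 * r)"
      proof -
        have "- (C * E * exp (- r) / r * (b x \<bullet> x)) \<le> C * E * exp (- r) / r * \<bar>b x \<bullet> x\<bar>"
        proof -
          define q where "q = C * E * exp (- r) / r"
          have "q * (- (b x \<bullet> x)) \<le> q * \<bar>b x \<bullet> x\<bar>" using q0 unfolding q_def[symmetric]
            by (intro mult_left_mono abs_ge_minus_self)
          then show ?thesis unfolding q_def by simp
        qed
        also have "\<dots> \<le> C * E * exp (- r) / r * (Cb2 * r)" using bx2 q0 by (intro mult_left_mono) auto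
        finally show ?thesis .
      qed
      moreover have "C * E * exp (- r) / r * (Cb2 * r) = C * E * exp (- r) * Cb2" using r by simp
      ultimately show ?thesis by (simp add: algebra_simps)
    qed
    have k4: "n * (C * E * exp (- r) / r) \<ge> C * E * exp (- r) / r"
    proof -
      define q where "q = C * E * exp (- r) / r"
      have "q \<ge> 0" using P0 r by (simp add: q_def)
      then have "1 * q \<le> n * q" using n2 by (intro mult_right_mono) auto
      then show ?thesis by (simp add: q_def)
    qed
    have lamh: "lam * E * hh r \<ge> C * E * exp (- r) + C * E * exp (- r) * Cb2"
    proof -
      have "C * blo * exp (- r) \<le> hh r" using hlo[of r] xr0 xK by (simp add: r_def)
      then have "lam * E * (C * blo * exp (- r)) \<le> lam * E * hh r" using lam0 E0 by (intro mult_left_mono) auto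
      moreover have "lam * E * (C * blo * exp (- r)) = C * E * exp (- r) + C * E * exp (- r) * Cb2"
      proof -
        have "lam * E * (C * blo * exp (- r)) = (lam * blo) * (C * E * exp (- r))" by (simp add: mult_ac)
        also have "\<dots> = (1 + Cb2) * (C * E * exp (- r))" by (simp only: lamblo)
        also have "\<dots> = C * E * exp (- r) + C * E * exp (- r) * Cb2" by (simp add: algebra_simps)
        finally show ?thesis .
      qed
      ultimately show ?thesis by simp
    qed
    have Kd: "\<delta> * K = n * \<delta> + \<delta> * Cb1 + \<delta>" by (simp add: K_def algebra_simps)
    have sp': "\<sigma> * f0 x t \<ge> \<sigma> * \<tau>
      - (C * E * (exp (- r) / r + exp (- r) / r^2) * r + n * (\<delta> - C * E * exp (- r) / r))
      - (\<delta> - C * E * exp (- r) / r) * (b x \<bullet> x)" using sp by (simp add: r_def \<tau>_def)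
    have fb: "\<sigma> * f0 x t \<le> \<epsilon>" using f0b[of x t] xK sig by auto
    show False using sp' fb k1 k2 k3 k4 lamh Kd tsgn del eps by linarith
  qed
  have "Phi x0 t0 \<le> 2 * \<epsilon> * (1 + T) + exp (lam * T) * (2 * C * bhi * exp (- norm x0)) + \<delta> * (chi (norm x0) + K * T)"
  proof -
    have r: "r0 < norm x0" "norm x0 \<le> R2" using x0 R1 R2 by auto
    have a: "2 * \<epsilon> * (1 + t0) \<le> 2 * \<epsilon> * (1 + T)" using t0 eps by simp
    have "exp (lam * t0) * hh (norm x0) \<le> exp (lam * T) * hh (norm x0)"
      using t0 lam0 h0[OF r] by (intro mult_right_mono) auto
    also have "\<dots> \<le> exp (lam * T) * (2 * C * bhi * exp (- norm x0))"
      using hhi[OF r] by (intro mult_left_mono) auto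
    finally have b: "exp (lam * t0) * hh (norm x0) \<le> exp (lam * T) * (2 * C * bhi * exp (- norm x0))" .
    have c: "\<delta> * (chi (norm x0) + K * t0) \<le> \<delta> * (chi (norm x0) + K * T)"
      using t0 K0 del by (intro mult_left_mono add_left_mono mult_left_mono) auto
    show ?thesis using a b c by (simp add: Phi_def)
  qed
  then show ?thesis using claim by (simp add: C_def lam_def Cb2_def K_def Cb1_def chi_def mult.assoc)
qed


lemma sig_bound:
  fixes a c d :: real
  assumes "\<And>\<delta>. \<delta> > 0 \<Longrightarrow> a \<le> c + \<delta> * d" "d \<ge> 0"
  shows "a \<le> c"
proof (rule field_le_epsilon)
  fix e :: real assume e: "e > 0"
  have "a \<le> c + (e / (d + 1)) * d" using assms(1)[of "e / (d + 1)"] e assms(2) by simp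
  also have "(e / (d + 1)) * d \<le> e"
  proof -
    have "(e / (d + 1)) * d \<le> (e / (d + 1)) * (d + 1)" using e assms(2) by (intro mult_left_mono) auto
    also have "\<dots> = e" using assms(2) by simp
    finally show ?thesis .
  qed
  finally show "a \<le> c + e" by simp
qed

theorem main: "((\<lambda>r. SUP p\<in>{x::real^'n. norm x = r} \<times> {0..T}. \<bar>w (fst p) (snd p)\<bar>) \<longlongrightarrow> 0) at_top"
proof -
  obtain blo bhi where bb0: "0 < blo" "\<forall>r\<ge>r0. blo \<le> alpha r \<and> alpha r \<le> beta r \<and> beta r \<le> bhi"
    using beta_bounds by blast
  have bb: "\<And>r. r \<ge> r0 \<Longrightarrow> blo \<le> beta r \<and> beta r \<le> bhi" using bb0(2) by force
  obtain Q where Qb: "Q \<ge> 0" "\<And>y. norm y \<ge> r0 \<Longrightarrow> \<bar>b y \<bullet> y\<bar> \<le> Q * norm y powr (2 - n)"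
    using b_bound by blast
  obtain M0 where M0: "\<forall>x\<in>closure U. \<forall>t\<in>{0..T}. \<bar>w x t\<bar> \<le> M0" using w_bdd by blast
  define M where "M = max M0 1"
  have M: "M > 0" by (simp add: M_def)
  have Mb: "\<And>x t. norm x \<ge> r0 \<Longrightarrow> t \<in> {0..T} \<Longrightarrow> \<bar>w x t\<bar> \<le> M"
    using M0 unfolding M_def closure_U by force
  have bhi0: "bhi > 0" using bb[of r0] bb0(1) by simp
  show ?thesis
  proof (rule tendstoI)
    fix e :: real assume e: "e > 0"
    define \<epsilon> where "\<epsilon> = e / (2 * (3 + 2 * T))"
    have eps: "\<epsilon> > 0" using e T_pos by (simp add: \<epsilon>_def)
    have epsW: "\<epsilon> * (3 + 2 * T) < e"
    proof -
      define D where "D = 3 + 2 * T"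
      have D: "D > 0" using T_pos by (simp add: D_def)
      have "\<epsilon> * (3 + 2 * T) = e / (2 * D) * D" by (simp add: \<epsilon>_def D_def)
      also have "\<dots> = e / 2" using D by simp
      finally have "\<epsilon> * (3 + 2 * T) = e / 2" .
      then show ?thesis using e by simp
    qed
    obtain b1 where b1: "\<And>x. b1 \<le> norm x \<Longrightarrow> \<bar>w0 x\<bar> < \<epsilon>"
    proof -
      have "\<forall>\<^sub>F x in at_infinity. dist (w0 x) 0 < \<epsilon>" using tendstoD[OF w0_lim eps] .
      then show ?thesis using that unfolding eventually_at_infinity by auto
    qed
    obtain b2 where b2: "\<And>x. b2 \<le> norm x \<Longrightarrow> \<bar>(SUP t\<in>{0..T}. \<bar>f0 x t\<bar>)\<bar> < \<epsilon>"
    proof -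
      have "\<forall>\<^sub>F x in at_infinity. dist (SUP t\<in>{0..T}. \<bar>f0 x t\<bar>) 0 < \<epsilon>" using tendstoD[OF f0_lim eps] .
      then show ?thesis using that unfolding eventually_at_infinity by auto
    qed
    define R1 where "R1 = max (max b1 b2) (r0 + 1)"
    have R1: "R1 > r0" by (simp add: R1_def)
    have w0b: "\<bar>w0 x\<bar> \<le> \<epsilon>" if "norm x \<ge> R1" for x
    proof -
      have "b1 \<le> norm x" using that by (simp add: R1_def)
      then show ?thesis using b1[of x] by simp
    qed
    have f0b: "\<bar>f0 x t\<bar> \<le> \<epsilon>" if x: "norm x \<ge> R1" and t: "t \<in> {0..T}" for x t
    proof -
      have xc: "x \<in> closure U" using x R1 by (simp add: closure_U)
      have c1: "continuous_on {0..T} (\<lambda>t. (x, t))" by (intro continuous_intros)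
      have c2: "(\<lambda>t. (x, t)) ` {0..T} \<subseteq> closure U \<times> {0..T}" using xc by auto
      have "continuous_on {0..T} (\<lambda>t. (\<lambda>(x,t). f0 x t) (x, t))"
        by (rule continuous_on_compose2[OF f0_cont c1 c2])
      then have c0: "continuous_on {0..T} (\<lambda>t. f0 x t)" by simp
      have c: "continuous_on {0..T} (\<lambda>t. \<bar>f0 x t\<bar>)" by (rule continuous_on_rabs[OF c0])
      have bdd: "bdd_above ((\<lambda>t. \<bar>f0 x t\<bar>) ` {0..T})"
      proof -
        have "bounded ((\<lambda>t. \<bar>f0 x t\<bar>) ` {0..T})"
          by (rule compact_imp_bounded[OF compact_continuous_image[OF c compact_Icc]])
        then obtain B where "\<forall>y\<in>(\<lambda>t. \<bar>f0 x t\<bar>) ` {0..T}. \<bar>y\<bar> \<le> B" unfolding bounded_real by blast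
        then have "\<forall>y\<in>(\<lambda>t. \<bar>f0 x t\<bar>) ` {0..T}. y \<le> B" by auto
        then show ?thesis unfolding bdd_above_def by blast
      qed
      have "\<bar>f0 x t\<bar> \<le> (SUP t\<in>{0..T}. \<bar>f0 x t\<bar>)" by (rule cSUP_upper[OF t bdd])
      also have "\<dots> \<le> \<bar>(SUP t\<in>{0..T}. \<bar>f0 x t\<bar>)\<bar>" by simp
      also have "\<dots> < \<epsilon>"
      proof -
        have "b2 \<le> norm x" using x by (simp add: R1_def)
        then show ?thesis using b2[of x] by simp
      qed
      finally show ?thesis by simp
    qed
    define Kp where "Kp = exp ((1 + Q * r0 powr (1 - n)) / blo * T) * (2 * (M * exp R1 / blo) * bhi)"
    have Kp: "Kp > 0" using M bb0(1) bhi0 by (simp add: Kp_def)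
    define Rs where "Rs = max R1 (ln (Kp / \<epsilon>))"
    have wb: "\<bar>w x t\<bar> \<le> \<epsilon> * (3 + 2 * T)" if x: "norm x \<ge> Rs" and t: "t \<in> {0..T}" for x t
    proof -
      have xR1: "norm x \<ge> R1" using x by (simp add: Rs_def)
      have ex: "Kp * exp (- norm x) \<le> \<epsilon>"
      proof -
        have "ln (Kp / \<epsilon>) \<le> norm x" using x by (simp add: Rs_def)
        then have "exp (ln (Kp / \<epsilon>)) \<le> exp (norm x)" by simp
        moreover have "exp (ln (Kp / \<epsilon>)) = Kp / \<epsilon>" using Kp eps by simp
        ultimately have "Kp / \<epsilon> \<le> exp (norm x)" by simp
        then have "Kp \<le> \<epsilon> * exp (norm x)" using eps by (simp add: divide_le_eq mult.commute)
        then have "Kp * exp (- norm x) \<le> \<epsilon> * exp (norm x) * exp (- norm x)" by (intro mult_right_mono) auto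
        also have "\<epsilon> * exp (norm x) * exp (- norm x) = \<epsilon>" by (simp add: mult.assoc exp_minus_inverse)
        finally show ?thesis .
      qed
      have d0: "Ig (\<lambda>s. s) (norm x) + (n + Q * r0 powr (2 - n) + 1) * T \<ge> 0"
      proof -
        have "Ig (\<lambda>s. s) (norm x) \<ge> 0" using chi_facts(2)[OF bb0(1) bb] xR1 R1 by simp
        moreover have "n \<ge> 0" using n_def by simp
        ultimately show ?thesis using Qb(1) T_pos by (simp add: add_nonneg_nonneg)
      qed
      have one: "\<sigma> * w x t \<le> 2 * \<epsilon> * (1 + T) + Kp * exp (- norm x)" if sig: "\<sigma> = 1 \<or> \<sigma> = -1" for \<sigma>
      proof (rule sig_bound[OF _ d0])
        fix \<delta> :: real assume del: "\<delta> > 0"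
        show "\<sigma> * w x t \<le> 2 * \<epsilon> * (1 + T) + Kp * exp (- norm x)
            + \<delta> * (Ig (\<lambda>s. s) (norm x) + (n + Q * r0 powr (2 - n) + 1) * T)"
          using maxprin[OF eps R1 M Mb w0b f0b bb0(1) bb Qb sig xR1 t del] by (simp add: Kp_def mult.assoc)
      qed
      have "w x t \<le> 2 * \<epsilon> * (1 + T) + \<epsilon>" using one[of 1] ex by simp
      moreover have "- w x t \<le> 2 * \<epsilon> * (1 + T) + \<epsilon>" using one[of "-1"] ex by simp
      ultimately show ?thesis by (simp add: algebra_simps abs_le_iff)
    qed
    show "\<forall>\<^sub>F r in at_top. dist (SUP p\<in>{x::real^'n. norm x = r} \<times> {0..T}. \<bar>w (fst p) (snd p)\<bar>) 0 < e"
      unfolding eventually_at_top_linorder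
    proof (intro exI allI impI)
      fix r assume r: "r \<ge> max Rs 0"
      define S where "S = {x::real^'n. norm x = r} \<times> {0..T}"
      obtain k :: 'n where True by blast
      have ne: "(r *\<^sub>R axis k 1, 0) \<in> S" using r T_pos by (simp add: S_def)
      have ub: "\<And>p. p \<in> S \<Longrightarrow> \<bar>w (fst p) (snd p)\<bar> \<le> \<epsilon> * (3 + 2 * T)"
        using wb r by (auto simp: S_def)
      have bdd: "bdd_above ((\<lambda>p. \<bar>w (fst p) (snd p)\<bar>) ` S)" using ub by (auto intro!: bdd_aboveI)
      have le: "(SUP p\<in>S. \<bar>w (fst p) (snd p)\<bar>) \<le> \<epsilon> * (3 + 2 * T)"
        using ne ub by (intro cSUP_least) auto
      have ge: "0 \<le> (SUP p\<in>S. \<bar>w (fst p) (snd p)\<bar>)"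
        using cSUP_upper[OF ne bdd] by (meson abs_ge_zero order.trans)
      show "dist (SUP p\<in>{x::real^'n. norm x = r} \<times> {0..T}. \<bar>w (fst p) (snd p)\<bar>) 0 < e"
        using le ge epsW by (simp add: S_def[symmetric] dist_real_def)
    qed
  qed
qed

end

theorem theorem5p8:
  fixes a10 a20 :: real and a1 a2 al1 al2 :: "nat \<Rightarrow> real" and N1 N2 :: nat
    and f1 f2 pcd :: "real \<Rightarrow> real"
    and r0 c1 c2 s0 slo shi T :: real and Shat :: "real \<Rightarrow> real"
    and f0 w :: "real^'n::finite \<Rightarrow> real \<Rightarrow> real" and w0 :: "real^'n \<Rightarrow> real"
    and G :: "real^'n \<Rightarrow> real \<Rightarrow> real"
    and n :: real and g1 g2 F1 F2 :: "real \<Rightarrow> real"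
    and Sstar :: "real^'n \<Rightarrow> real" and u1 u2 b :: "real^'n \<Rightarrow> real^'n"
    and B A :: "real^'n \<Rightarrow> real^'n^'n" and U :: "(real^'n) set"
  assumes n_def: "n = real CARD('n)"
    and g1_def: "g1 = gfun a10 a1 al1 N1" and g2_def: "g2 = gfun a20 a2 al2 N2"
    and F1_def: "F1 = (\<lambda>s. 1 / (pcd s * f1 s))" and F2_def: "F2 = (\<lambda>s. 1 / (pcd s * f2 s))"
    and Sstar_def: "Sstar = (\<lambda>x::real^'n. Shat (norm x))"
    and u1_def: "u1 = (\<lambda>x::real^'n. (c1 * norm x powr (- n)) *\<^sub>R x)"
    and u2_def: "u2 = (\<lambda>x::real^'n. (c2 * norm x powr (- n)) *\<^sub>R x)"
    and B_def: "B = (\<lambda>x. F1 (Sstar x) *\<^sub>R Gjac g1 (u1 x) + F2 (Sstar x) *\<^sub>R Gjac g2 (u2 x))"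
    and A_def: "A = (\<lambda>x. matrix_inv (B x))"
    and b_def: "b = (\<lambda>x. deriv F2 (Sstar x) *\<^sub>R (g2 (norm (u2 x)) *\<^sub>R u2 x)
                 - deriv F1 (Sstar x) *\<^sub>R (g1 (norm (u1 x)) *\<^sub>R u1 x))"
    and U_def: "U = {x::real^'n. norm x > r0}"
    and dim: "CARD('n) \<ge> 2"
    and g1_adm: "g_admissible a10 a1 al1 N1" and g2_adm: "g_admissible a20 a2 al2 N2"
    and f1_cont: "continuous_on {0..1} f1" and f2_cont: "continuous_on {0..1} f2"
    and f1_diff: "\<forall>s\<in>{0<..<1}. f1 differentiable (at s)"
    and f2_diff: "\<forall>s\<in>{0<..<1}. f2 differentiable (at s)"
    and f1_C1: "continuous_on {0<..<1} (deriv f1)" and f2_C1: "continuous_on {0<..<1} (deriv f2)"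
    and f1_0: "f1 0 = 0" and f2_1: "f2 1 = 0"
    and f1_mono: "\<forall>s\<in>{0<..<1}. deriv f1 s > 0" and f2_mono: "\<forall>s\<in>{0<..<1}. deriv f2 s < 0"
    and pcd_diff: "\<forall>s\<in>{0<..<1}. pcd differentiable (at s)"
    and pcd_C1: "continuous_on {0<..<1} (deriv pcd)"
    and pcd_pos: "\<forall>s\<in>{0<..<1}. pcd s > 0"
    and r0_pos: "r0 > 0" and c_nz: "c1\<^sup>2 + c2\<^sup>2 > 0" and s0: "0 < s0" "s0 < 1"
    and Shat_ode: "\<forall>r\<ge>r0. (Shat has_real_derivative
          (g2 \<bar>c2 * r powr (1 - n)\<bar> * (c2 * r powr (1 - n)) * F2 (Shat r)
           - g1 \<bar>c1 * r powr (1 - n)\<bar> * (c1 * r powr (1 - n)) * F1 (Shat r))) (at r within {r0..})"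
    and Shat_init: "Shat r0 = s0"
    and Shat_bounds: "0 < slo" "shi < 1" "\<forall>r\<ge>r0. slo \<le> Shat r \<and> Shat r \<le> shi"
    and T_pos: "T > 0"
    and f0_cont: "continuous_on (closure U \<times> {0..T}) (\<lambda>(x,t). f0 x t)"
    and w0_cont: "continuous_on (closure U) w0"
    and G_cont: "continuous_on ({x. norm x = r0} \<times> {0..T}) (\<lambda>(x,t). G x t)"
    and w_C21: "C21 U T w"
    and w_cont: "continuous_on (closure U \<times> {0..T}) (\<lambda>(x,t). w x t)"
    and w_bdd: "\<exists>M. \<forall>x\<in>closure U. \<forall>t\<in>{0..T}. \<bar>w x t\<bar> \<le> M"
    and w_eq: "\<forall>x\<in>U. \<forall>t\<in>{0<..T}. Lop A b T w x t = f0 x t"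
    and w_init: "\<forall>x\<in>U. w x 0 = w0 x"
    and w_bdry: "\<forall>x. norm x = r0 \<longrightarrow> (\<forall>t\<in>{0<..T}. w x t = G x t)"
    and w0_lim: "(w0 \<longlongrightarrow> 0) at_infinity"
    and f0_lim: "((\<lambda>x. SUP t\<in>{0..T}. \<bar>f0 x t\<bar>) \<longlongrightarrow> 0) at_infinity"
  shows "((\<lambda>r. SUP p\<in>{x::real^'n. norm x = r} \<times> {0..T}. \<bar>w (fst p) (snd p)\<bar>) \<longlongrightarrow> 0) at_top"
  proof -
  show ?thesis by (rule pms.main[OF pms.intro[OF assms]])
qed

end
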